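(* Let $G$ be a connected graph having index $\lambda>2$ and second largest eigenvalue at most $2$. Then: (a) The vertex set $V(G)$ can be partitioned as $V(G)=M\cup A\cup H$ in such a way that: the induced subgraph $G|_M$ has index greater than $2$ and is minimal with respect to this property (every induced subgraph of $G|_M$ obtained by deleting a vertex has index at most $2$; such minimal graphs are the $18$ graphs listed by Cvetković and Rowlinson, each with at most $10$ vertices), and $G|_M$ has only one eigenvalue greater than $2$; $A$ consists of all vertices of $V(G)\setminus M$ adjacent in $G$ to some vertex of $M$; and the induced subgraph $G|_H$ is cyclotomic. (b) $G$ has at most $B:=10(3\lambda^4+\lambda^2+1)$ vertices of degree greater than $2$, and at most $\lambda^2B$ vertices of degree $1$.
   Context: Graphs are finite simple graphs; eigenvalues are those of the adjacency matrix. The index of a graph is its largest eigenvalue. A graph is cyclotomic if all its eigenvalues lie in $[-2,2]$. For $S\subseteq V(G)$, $G|_S$ denotes the induced subgraph on $S$. *)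

theory Defs
  imports "Jordan_Normal_Form.Char_Poly"
begin

text \<open>A finite simple graph is given by a finite vertex set V and a symmetric,
irreflexive adjacency relation E.  Induced subgraphs G|_S are represented by
the vertex subset S (with the same relation E).\<close>

definition simple_graph :: "'a set \<Rightarrow> ('a \<Rightarrow> 'a \<Rightarrow> bool) \<Rightarrow> bool" where
  "simple_graph V E \<longleftrightarrow> finite V \<and> (\<forall>u v. E u v \<longrightarrow> E v u) \<and> (\<forall>v. \<not> E v v)"

definition connected_graph :: "'a set \<Rightarrow> ('a \<Rightarrow> 'a \<Rightarrow> bool) \<Rightarrow> bool" where
  "connected_graph V E \<longleftrightarrow> V \<noteq> {} \<and>
     (\<forall>u\<in>V. \<forall>v\<in>V. (\<lambda>x y. x \<in> V \<and> y \<in> V \<and> E x y)\<^sup>*\<^sup>* u v)"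

definition adj_matrix :: "'a::linorder set \<Rightarrow> ('a \<Rightarrow> 'a \<Rightarrow> bool) \<Rightarrow> real mat" where
  "adj_matrix S E = (let vs = sorted_list_of_set S in
     mat (card S) (card S) (\<lambda>(i,j). if E (vs ! i) (vs ! j) then 1 else 0))"

text \<open>Spectrum (eigenvalues with multiplicity) = real roots of the characteristic polynomial
(all roots are real since the matrix is real symmetric).\<close>
definition spectrum_mset :: "'a::linorder set \<Rightarrow> ('a \<Rightarrow> 'a \<Rightarrow> bool) \<Rightarrow> real multiset" where
  "spectrum_mset S E = proots (char_poly (adj_matrix S E))"

definition eigs :: "'a::linorder set \<Rightarrow> ('a \<Rightarrow> 'a \<Rightarrow> bool) \<Rightarrow> real list" where
  "eigs S E = rev (sorted_list_of_multiset (spectrum_mset S E))"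

definition graph_index :: "'a::linorder set \<Rightarrow> ('a \<Rightarrow> 'a \<Rightarrow> bool) \<Rightarrow> real" where
  "graph_index S E = eigs S E ! 0"

definition second_eig :: "'a::linorder set \<Rightarrow> ('a \<Rightarrow> 'a \<Rightarrow> bool) \<Rightarrow> real" where
  "second_eig S E = eigs S E ! 1"

definition cyclotomic :: "'a::linorder set \<Rightarrow> ('a \<Rightarrow> 'a \<Rightarrow> bool) \<Rightarrow> bool" where
  "cyclotomic S E \<longleftrightarrow> (\<forall>\<mu> \<in># spectrum_mset S E. -2 \<le> \<mu> \<and> \<mu> \<le> 2)"

definition degree :: "'a set \<Rightarrow> ('a \<Rightarrow> 'a \<Rightarrow> bool) \<Rightarrow> 'a \<Rightarrow> nat" where
  "degree V E v = card {w \<in> V. E v w}"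

end

theory Submission
  imports Defs
begin

lemma sprod_real_sum: "(v::real vec) \<bullet> w = (\<Sum>i<dim_vec w. v$i * w$i)"
  unfolding scalar_prod_def by (simp add: atLeast0LessThan)

lemma real_sym_eigen:
  fixes A :: "real mat"
  assumes A: "A \<in> carrier_mat n n" and sym: "\<And>i j. i<n \<Longrightarrow> j<n \<Longrightarrow> A $$ (i,j) = A $$ (j,i)"
    and n: "n > 0"
  shows "\<exists>\<mu> v. v \<in> carrier_vec n \<and> v \<bullet> v = 1 \<and> A *\<^sub>v v = \<mu> \<cdot>\<^sub>v v"
proof -
  let ?Ac = "map_mat complex_of_real A"
  have Ac: "?Ac \<in> carrier_mat n n" using A by simp
  from char_poly_factorized[OF Ac] obtain as where cp: "char_poly ?Ac = (\<Prod>a\<leftarrow>as. [:-a,1:])"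
    and len: "length as = n" by blast
  from len n obtain a as' where as: "as = a # as'" by (cases as) auto
  have "poly (char_poly ?Ac) a = 0" unfolding cp as by (simp add: poly_prod_list)
  hence "eigenvalue ?Ac a" using eigenvalue_root_char_poly[OF Ac] by simp
  then obtain z where zc: "z \<in> carrier_vec n" and z0: "z \<noteq> 0\<^sub>v n" and ze: "?Ac *\<^sub>v z = a \<cdot>\<^sub>v z"
    unfolding eigenvalue_def eigenvector_def using Ac by auto
  define s where "s = (\<Sum>i<n. cnj (z$i) * (?Ac *\<^sub>v z)$i)"
  define N where "N = (\<Sum>i<n. cnj (z$i) * z$i)"
  have s1: "s = a * N" unfolding s_def N_def ze using zc
    by (simp add: sum_distrib_left mult.assoc mult.left_commute)
  have rowi: "\<And>i. i < n \<Longrightarrow> (?Ac *\<^sub>v z)$i = (\<Sum>j<n. complex_of_real (A$$(i,j)) * z$j)"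
    using A zc by (simp add: scalar_prod_def atLeast0LessThan)
  have s2: "s = (\<Sum>i<n. \<Sum>j<n. cnj (z$i) * complex_of_real (A$$(i,j)) * z$j)"
    unfolding s_def by (simp add: rowi sum_distrib_left mult.assoc)
  have "cnj s = (\<Sum>i<n. \<Sum>j<n. z$i * complex_of_real (A$$(i,j)) * cnj (z$j))"
    unfolding s2 by (simp add: cnj_sum)
  also have "\<dots> = (\<Sum>j<n. \<Sum>i<n. z$i * complex_of_real (A$$(i,j)) * cnj (z$j))"
    by (rule sum.swap)
  also have "\<dots> = s" unfolding s2
    by (intro sum.cong refl, simp add: sym mult.commute mult.left_commute)
  finally have cs: "cnj s = s" .
  have Nr: "N = complex_of_real (\<Sum>i<n. (cmod (z$i))^2)"
  proof -
    have "N = (\<Sum>i<n. complex_of_real ((cmod (z$i))^2))"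
      unfolding N_def by (intro sum.cong refl) (metis complex_norm_square mult.commute)
    thus ?thesis by simp
  qed
  have "\<exists>i<n. z$i \<noteq> 0" using z0 zc by (metis carrier_vecD eq_vecI index_zero_vec(1) index_zero_vec(2))
  then obtain i0 where i0: "i0 < n" "z$i0 \<noteq> 0" by blast
  have Npos: "(\<Sum>i<n. (cmod (z$i))^2) > 0"
  proof -
    have "(cmod (z$i0))^2 \<le> (\<Sum>i<n. (cmod (z$i))^2)"
      by (rule member_le_sum) (use i0 in auto)
    moreover have "(cmod (z$i0))^2 > 0" using i0 by simp
    ultimately show ?thesis by linarith
  qed
  have ca: "cnj a = a"
  proof -
    have "cnj a * N = a * N" using cs unfolding s1 Nr by simp
    moreover have "N \<noteq> 0" using Npos Nr by (metis of_real_eq_0_iff less_irrefl)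
    ultimately show ?thesis by simp
  qed
  define r where "r = Re a"
  have "Im a = 0" using arg_cong[OF ca, of Im] by simp
  hence ar: "a = complex_of_real r" unfolding r_def by (simp add: complex_eq_iff)
  have "poly (char_poly ?Ac) (complex_of_real r) = 0" using \<open>poly (char_poly ?Ac) a = 0\<close> ar by simp
  hence "complex_of_real (poly (char_poly A) r) = 0"
    unfolding of_real_hom.char_poly_hom[OF A] by (simp add: of_real_hom.poly_map_poly)
  hence "poly (char_poly A) r = 0" by simp
  hence "eigenvalue A r" using eigenvalue_root_char_poly[OF A] by simp
  then obtain w where wc: "w \<in> carrier_vec n" and w0: "w \<noteq> 0\<^sub>v n" and we: "A *\<^sub>v w = r \<cdot>\<^sub>v w"
    unfolding eigenvalue_def eigenvector_def using A by auto
  have "\<exists>i<n. w$i \<noteq> 0" using w0 wc by (metis carrier_vecD eq_vecI index_zero_vec(1) index_zero_vec(2))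
  then obtain j0 where j0: "j0 < n" "w$j0 \<noteq> 0" by blast
  define m where "m = w \<bullet> w"
  have m: "m = (\<Sum>i<n. (w$i)^2)" unfolding m_def sprod_real_sum using wc by (simp add: power2_eq_square)
  have mpos: "m > 0"
  proof -
    have "(w$j0)^2 \<le> (\<Sum>i<n. (w$i)^2)" by (rule member_le_sum) (use j0 in auto)
    moreover have "(w$j0)^2 > 0" using j0 by simp
    ultimately show ?thesis unfolding m by linarith
  qed
  define v where "v = (1 / sqrt m) \<cdot>\<^sub>v w"
  have vc: "v \<in> carrier_vec n" unfolding v_def using wc by simp
  have "v \<bullet> v = (1/sqrt m) * (1/sqrt m) * m" unfolding v_def m_def using wc
    by (simp add: smult_scalar_prod_distrib scalar_prod_smult_distrib)
  also have "\<dots> = 1" using mpos by (simp add: real_sqrt_mult[symmetric] del: real_sqrt_mult)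
  finally have vv: "v \<bullet> v = 1" .
  have "A *\<^sub>v v = r \<cdot>\<^sub>v v" unfolding v_def using A wc we
    by (simp add: mult_mat_vec smult_smult_assoc mult.commute)
  thus ?thesis using vc vv by blast
qed



lemma mult_entry:
  assumes "M \<in> carrier_mat n m" "N \<in> carrier_mat m p" "i < n" "j < p"
  shows "(M * N) $$ (i,j) = (\<Sum>k<m. M$$(i,k) * N$$(k,j))"
  using assms by (auto simp: scalar_prod_def atLeast0LessThan intro!: sum.cong)

lemma mult_vec_entry:
  assumes "M \<in> carrier_mat n m" "x \<in> carrier_vec m" "i < n"
  shows "(M *\<^sub>v x) $ i = (\<Sum>k<m. M$$(i,k) * x$k)"
  using assms by (auto simp: scalar_prod_def atLeast0LessThan intro!: sum.cong)

lemma sum_delta_nat: "i < (n::nat) \<Longrightarrow> (\<Sum>k<n. if k = i then f k else 0) = (f i :: 'b::comm_monoid_add)"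
  by (simp add: sum.delta')

lemma householder:
  fixes v :: "real vec"
  assumes vc: "v \<in> carrier_vec n" and vv: "v \<bullet> v = 1" and n: "0 < n"
  shows "\<exists>H. H \<in> carrier_mat n n \<and> transpose_mat H = H \<and> H * H = 1\<^sub>m n \<and> H *\<^sub>v unit_vec n 0 = v"
proof (cases "v = unit_vec n 0")
  case True then show ?thesis by (intro exI[of _ "1\<^sub>m n"]) simp
next
  case False
  define w where "w = v - unit_vec n 0"
  have wc: "w \<in> carrier_vec n" unfolding w_def using vc by simp
  have wi: "\<And>i. i < n \<Longrightarrow> w$i = v$i - (if i = 0 then 1 else 0)" unfolding w_def using vc by simp
  define s where "s = (\<Sum>k<n. (w$k)^2)"
  have v1: "(\<Sum>k<n. (v$k)^2) = 1" using vv vc unfolding scalar_prod_def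
    by (simp add: atLeast0LessThan power2_eq_square)
  have "s = (\<Sum>k<n. (v$k)^2 - 2 * (if k = 0 then v$k else 0) + (if k = 0 then 1 else 0))"
    unfolding s_def by (intro sum.cong refl) (auto simp: wi power2_eq_square algebra_simps)
  also have "\<dots> = 2 - 2 * v$0" using n v1 by (simp add: sum.distrib sum_subtractf sum_distrib_left[symmetric])
  finally have s2: "s = 2 - 2 * v$0" .
  have "\<exists>i<n. w$i \<noteq> 0"
  proof (rule ccontr)
    assume "\<not> ?thesis"
    hence "v = unit_vec n 0" using vc wi by (intro eq_vecI) (auto simp: algebra_simps)
    thus False using False by simp
  qed
  then obtain i0 where i0: "i0 < n" "w$i0 \<noteq> 0" by blast
  have spos: "s > 0"
  proof -
    have "(w$i0)^2 \<le> s" unfolding s_def by (rule member_le_sum) (use i0 in auto)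
    moreover have "(w$i0)^2 > 0" using i0 by simp
    ultimately show ?thesis by linarith
  qed
  define H where "H = mat n n (\<lambda>(i,j). (if i = j then 1 else 0) - 2 * (w$i) * (w$j) / s)"
  have Hc: "H \<in> carrier_mat n n" unfolding H_def by simp
  have Hij: "\<And>i j. i < n \<Longrightarrow> j < n \<Longrightarrow> H $$ (i,j) = (if i = j then 1 else 0) - 2 * (w$i) * (w$j) / s"
    unfolding H_def by simp
  have HT: "transpose_mat H = H" using Hc by (intro eq_matI) (auto simp: Hij mult.commute)
  have HH: "H * H = 1\<^sub>m n"
  proof (rule eq_matI)
    fix i j assume i: "i < dim_row (1\<^sub>m n)" and j: "j < dim_col (1\<^sub>m n)"
    hence i: "i < n" and j: "j < n" by auto
    have "(H * H) $$ (i,j) = (\<Sum>k<n. H$$(i,k) * H$$(k,j))" by (rule mult_entry[OF Hc Hc i j])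
    also have "\<dots> = (\<Sum>k<n. (if k = i then (if k = j then 1 else 0) else 0)
         - (if k = i then 2 * (w$k) * (w$j) / s else 0)
         - (if k = j then 2 * (w$i) * (w$k) / s else 0)
         + 4 * (w$i) * (w$j) / s^2 * (w$k)^2)"
      using spos by (intro sum.cong refl) (auto simp: Hij i j power2_eq_square field_simps)
    also have "\<dots> = (\<Sum>k<n. (if k = i then (if k = j then 1 else 0) else 0))
         - (\<Sum>k<n. (if k = i then 2 * (w$k) * (w$j) / s else 0))
         - (\<Sum>k<n. (if k = j then 2 * (w$i) * (w$k) / s else 0))
         + (\<Sum>k<n. 4 * (w$i) * (w$j) / s^2 * (w$k)^2)"
      by (simp only: sum.distrib sum_subtractf)
    also have "\<dots> = (if i = j then 1 else 0) - 2 * (w$i) * (w$j) / s - 2 * (w$i) * (w$j) / s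
        + 4 * (w$i) * (w$j) / s^2 * s"
    proof -
      have a: "(\<Sum>k<n. 4 * (w$i) * (w$j) / s^2 * (w$k)^2) = 4 * (w$i) * (w$j) / s^2 * s"
        unfolding s_def by (simp only: sum_distrib_left)
      have b: "(\<Sum>k<n. (if k = i then (if k = j then 1 else 0) else 0)) = (if i = j then 1 else (0::real))"
        using i by (simp add: sum.delta')
      have c: "(\<Sum>k<n. (if k = i then 2 * (w$k) * (w$j) / s else 0)) = 2 * (w$i) * (w$j) / s"
        using i by (simp add: sum.delta')
      have d: "(\<Sum>k<n. (if k = j then 2 * (w$i) * (w$k) / s else 0)) = 2 * (w$i) * (w$j) / s"
        using j by (simp add: sum.delta')
      show ?thesis unfolding a b c d ..
    qed
    also have "\<dots> = 1\<^sub>m n $$ (i,j)" using spos i j by (simp add: power2_eq_square field_simps)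
    finally show "(H * H) $$ (i,j) = 1\<^sub>m n $$ (i,j)" .
  qed (use Hc in auto)
  have He: "H *\<^sub>v unit_vec n 0 = v"
  proof (rule eq_vecI)
    fix i assume "i < dim_vec v"
    hence i: "i < n" using vc by simp
    have "(H *\<^sub>v unit_vec n 0) $ i = (\<Sum>k<n. H$$(i,k) * unit_vec n 0 $ k)"
      by (rule mult_vec_entry[OF Hc _ i]) simp
    also have "\<dots> = (\<Sum>k<n. if k = 0 then H$$(i,k) else 0)"
      by (intro sum.cong refl) (use n in auto)
    also have "\<dots> = H $$ (i,0)" using n by (simp add: sum.delta')
    also have "\<dots> = (if i = 0 then 1 else 0) - 2 * (w$i) * (v$0 - 1) / s"
      using i n by (simp add: Hij wi)
    also have "\<dots> = (if i = 0 then 1 else 0) + w$i"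
      using spos unfolding s2 by (simp add: field_simps)
    also have "\<dots> = v $ i" using i by (simp add: wi)
    finally show "(H *\<^sub>v unit_vec n 0) $ i = v $ i" .
  qed (use Hc vc in auto)
  show ?thesis using Hc HT HH He by blast
qed


definition dg :: "real list \<Rightarrow> real mat" where
  "dg ds = mat (length ds) (length ds) (\<lambda>(i,j). if i = j then ds!i else 0)"

lemma dg_carrier[simp]: "dg ds \<in> carrier_mat (length ds) (length ds)"
  by (simp add: dg_def)

lemma PDPt_entry:
  assumes P: "P \<in> carrier_mat n n" and l: "length ds = n" and i: "i<n" and j: "j<n"
  shows "(P * dg ds * transpose_mat P) $$ (i,j) = (\<Sum>k<n. P$$(i,k) * ds!k * P$$(j,k))"
proof -
  have D: "dg ds \<in> carrier_mat n n" using dg_carrier[of ds] l by simp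
  have PD: "P * dg ds \<in> carrier_mat n n" using P D by simp
  have PT: "transpose_mat P \<in> carrier_mat n n" using P by simp
  have e1: "(P * dg ds) $$ (i,k) = P$$(i,k) * ds!k" if k: "k < n" for k
  proof -
    have "(P * dg ds) $$ (i,k) = (\<Sum>l<n. P$$(i,l) * dg ds $$ (l,k))" by (rule mult_entry[OF P D i k])
    also have "\<dots> = (\<Sum>l<n. if l = k then P$$(i,l) * ds!l else 0)"
      by (intro sum.cong refl) (use l k in \<open>auto simp: dg_def\<close>)
    also have "\<dots> = P$$(i,k) * ds!k" using k by (simp add: sum.delta')
    finally show ?thesis .
  qed
  have "(P * dg ds * transpose_mat P) $$ (i,j) = (\<Sum>k<n. (P * dg ds)$$(i,k) * transpose_mat P $$ (k,j))"
    by (rule mult_entry[OF PD PT i j])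
  also have "\<dots> = (\<Sum>k<n. P$$(i,k) * ds!k * P$$(j,k))"
    by (intro sum.cong refl) (use P j in \<open>simp add: e1\<close>)
  finally show ?thesis .
qed

lemma mat_col0_entry:
  fixes M :: "real mat"
  assumes M: "M \<in> carrier_mat n n" and i: "i < n"
  shows "(M *\<^sub>v unit_vec n 0) $ i = M $$ (i,0)"
proof -
  have n: "0 < n" using i by simp
  have "(M *\<^sub>v unit_vec n 0) $ i = (\<Sum>k<n. M$$(i,k) * unit_vec n 0 $ k)"
    by (rule mult_vec_entry[OF M _ i]) simp
  also have "\<dots> = (\<Sum>k<n. if k = 0 then M$$(i,k) else 0)"
    by (intro sum.cong refl) (use n in auto)
  also have "\<dots> = M $$ (i,0)" using n by (simp add: sum.delta')
  finally show ?thesis .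
qed

theorem spectral:
  fixes A :: "real mat"
  assumes "A \<in> carrier_mat n n" "\<And>i j. i<n \<Longrightarrow> j<n \<Longrightarrow> A$$(i,j) = A$$(j,i)"
  shows "\<exists>P ds. P \<in> carrier_mat n n \<and> transpose_mat P * P = 1\<^sub>m n \<and> length ds = n
           \<and> A = P * dg ds * transpose_mat P"
  using assms
proof (induction n arbitrary: A)
  case 0
  show ?case by (intro exI[of _ "1\<^sub>m 0"] exI[of _ "[]"]) (use 0 in \<open>auto intro!: eq_matI simp: dg_def\<close>)
next
  case (Suc m A)
  define n where "n = Suc m"
  have A: "A \<in> carrier_mat n n" using Suc.prems(1) unfolding n_def .
  have Asym: "\<And>i j. i<n \<Longrightarrow> j<n \<Longrightarrow> A$$(i,j) = A$$(j,i)" using Suc.prems(2) unfolding n_def .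
  have n0: "0 < n" unfolding n_def by simp
  obtain \<mu> v where vc: "v \<in> carrier_vec n" and vv: "v \<bullet> v = 1" and Av: "A *\<^sub>v v = \<mu> \<cdot>\<^sub>v v"
    using real_sym_eigen[OF A Asym n0] by blast
  obtain H where Hc: "H \<in> carrier_mat n n" and HT: "transpose_mat H = H" and HH: "H * H = 1\<^sub>m n"
    and He: "H *\<^sub>v unit_vec n 0 = v"
    using householder[OF vc vv n0] by blast
  have AT: "transpose_mat A = A" using A Asym by (intro eq_matI) auto
  define A' where "A' = H * A * H"
  have A'c: "A' \<in> carrier_mat n n" unfolding A'_def using Hc A by simp
  have A'T: "transpose_mat A' = A'"
  proof -
    have "transpose_mat A' = transpose_mat H * transpose_mat (H * A)"
      unfolding A'_def by (rule transpose_mult[of _ n n]) (use Hc A in auto)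
    also have "transpose_mat (H * A) = transpose_mat A * transpose_mat H"
      by (rule transpose_mult[of _ n n]) (use Hc A in auto)
    finally show ?thesis unfolding A'_def AT HT using Hc A by simp
  qed
  have A'sym: "A'$$(i,j) = A'$$(j,i)" if "i < n" "j < n" for i j
    using arg_cong[OF A'T, of "\<lambda>M. M $$ (j,i)"] that A'c by simp
  have Hv: "H *\<^sub>v v = unit_vec n 0"
  proof -
    have "H *\<^sub>v v = (H * H) *\<^sub>v unit_vec n 0" unfolding He[symmetric] using Hc by simp
    thus ?thesis unfolding HH by simp
  qed
  have col0: "A' *\<^sub>v unit_vec n 0 = \<mu> \<cdot>\<^sub>v unit_vec n 0"
  proof -
    have "A' *\<^sub>v unit_vec n 0 = (H * A) *\<^sub>v (H *\<^sub>v unit_vec n 0)"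
      unfolding A'_def by (rule assoc_mult_mat_vec) (use Hc A in auto)
    also have "\<dots> = H *\<^sub>v (A *\<^sub>v (H *\<^sub>v unit_vec n 0))"
      by (rule assoc_mult_mat_vec) (use Hc A in auto)
    also have "\<dots> = \<mu> \<cdot>\<^sub>v (H *\<^sub>v v)" unfolding He Av using Hc vc by (simp add: mult_mat_vec)
    finally show ?thesis unfolding Hv .
  qed
  have A'i0: "A' $$ (i,0) = (if i = 0 then \<mu> else 0)" if i: "i < n" for i
    using mat_col0_entry[OF A'c i] arg_cong[OF col0, of "\<lambda>x. x $ i"] i by (cases "i = 0") auto
  have A'0j: "A' $$ (0,j) = (if j = 0 then \<mu> else 0)" if "j < n" for j
    using A'sym[of 0 j] A'i0[of j] that n0 by simp
  define A3 where "A3 = mat m m (\<lambda>(i,j). A' $$ (Suc i, Suc j))"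
  have A3c: "A3 \<in> carrier_mat m m" unfolding A3_def by simp
  have A3sym: "\<And>i j. i<m \<Longrightarrow> j<m \<Longrightarrow> A3$$(i,j) = A3$$(j,i)"
    unfolding A3_def using A'sym n_def by simp
  obtain P3 ds3 where P3c: "P3 \<in> carrier_mat m m" and P3o: "transpose_mat P3 * P3 = 1\<^sub>m m"
    and l3: "length ds3 = m" and A3eq: "A3 = P3 * dg ds3 * transpose_mat P3"
    using Suc.IH[OF A3c A3sym] by blast
  define Pe where "Pe = mat n n (\<lambda>(i,j). if i = 0 then (if j = 0 then 1 else 0)
      else if j = 0 then 0 else P3 $$ (i - 1, j - 1))"
  have Pec: "Pe \<in> carrier_mat n n" unfolding Pe_def by simp
  have Pe0: "\<And>j. j < n \<Longrightarrow> Pe $$ (0,j) = (if j = 0 then 1 else 0)" unfolding Pe_def using n0 by simp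
  have Pe0': "\<And>i. i < n \<Longrightarrow> Pe $$ (i,0) = (if i = 0 then 1 else 0)" unfolding Pe_def using n0 by simp
  have PeS: "\<And>i j. i < m \<Longrightarrow> j < m \<Longrightarrow> Pe $$ (Suc i, Suc j) = P3 $$ (i,j)"
    unfolding Pe_def n_def by simp
  have PeO: "transpose_mat Pe * Pe = 1\<^sub>m n"
  proof (rule eq_matI)
    fix i j assume "i < dim_row (1\<^sub>m n)" "j < dim_col (1\<^sub>m n)"
    hence i: "i < n" and j: "j < n" by auto
    have PeT: "transpose_mat Pe \<in> carrier_mat n n" using Pec by simp
    have "(transpose_mat Pe * Pe) $$ (i,j) = (\<Sum>k<n. Pe$$(k,i) * Pe$$(k,j))"
      using mult_entry[OF PeT Pec i j] Pec i by simp
    also have "\<dots> = Pe$$(0,i) * Pe$$(0,j) + (\<Sum>k<m. Pe$$(Suc k,i) * Pe$$(Suc k,j))"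
      unfolding n_def by (rule sum.lessThan_Suc_shift)
    also have "\<dots> = 1\<^sub>m n $$ (i,j)"
    proof (cases i)
      case 0
      thus ?thesis using i j Pe0 Pe0' by (simp add: n_def)
    next
      case (Suc i')
      note i' = this
      show ?thesis
      proof (cases j)
        case 0
        thus ?thesis using i j Pe0 Pe0' i' by (simp add: n_def)
      next
        case (Suc j')
        have i'm: "i' < m" and j'm: "j' < m" using i j i' Suc n_def by auto
        have "(\<Sum>k<m. Pe$$(Suc k,i) * Pe$$(Suc k,j)) = (\<Sum>k<m. P3$$(k,i') * P3$$(k,j'))"
          by (intro sum.cong refl) (simp add: i' Suc PeS i'm j'm)
        also have "\<dots> = (transpose_mat P3 * P3) $$ (i',j')"
          using mult_entry[of "transpose_mat P3" m m P3 m i' j'] P3c i'm j'm by simp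
        also have "\<dots> = (if i' = j' then 1 else 0)" unfolding P3o using i'm j'm by simp
        finally show ?thesis using i j i' Suc Pe0 by simp
      qed
    qed
    finally show "(transpose_mat Pe * Pe) $$ (i,j) = 1\<^sub>m n $$ (i,j)" .
  qed (use Pec in auto)
  define ds where "ds = \<mu> # ds3"
  have lds: "length ds = n" unfolding ds_def n_def using l3 by simp
  have A'eq: "A' = Pe * dg ds * transpose_mat Pe"
  proof (rule eq_matI)
    fix i j assume "i < dim_row (Pe * dg ds * transpose_mat Pe)" "j < dim_col (Pe * dg ds * transpose_mat Pe)"
    hence i: "i < n" and j: "j < n" using Pec by auto
    have "(Pe * dg ds * transpose_mat Pe) $$ (i,j) = (\<Sum>k<n. Pe$$(i,k) * ds!k * Pe$$(j,k))"
      by (rule PDPt_entry[OF Pec lds i j])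
    also have "\<dots> = Pe$$(i,0) * \<mu> * Pe$$(j,0) + (\<Sum>k<m. Pe$$(i,Suc k) * ds3!k * Pe$$(j,Suc k))"
      unfolding n_def ds_def by (subst sum.lessThan_Suc_shift) simp
    also have "\<dots> = A' $$ (i,j)"
    proof (cases i)
      case 0
      thus ?thesis using i j Pe0 Pe0' A'0j by (simp add: n_def)
    next
      case (Suc i')
      note i' = this
      show ?thesis
      proof (cases j)
        case 0
        thus ?thesis using i j Pe0 Pe0' i' A'i0 by (simp add: n_def)
      next
        case (Suc j')
        have i'm: "i' < m" and j'm: "j' < m" using i j i' Suc n_def by auto
        have "(\<Sum>k<m. Pe$$(i,Suc k) * ds3!k * Pe$$(j,Suc k)) = (\<Sum>k<m. P3$$(i',k) * ds3!k * P3$$(j',k))"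
          by (intro sum.cong refl) (simp add: i' Suc PeS i'm j'm)
        also have "\<dots> = A3 $$ (i',j')"
          unfolding A3eq by (rule PDPt_entry[OF P3c l3 i'm j'm, symmetric])
        also have "\<dots> = A' $$ (i,j)" unfolding A3_def using i'm j'm i' Suc by simp
        finally show ?thesis using i j i' Suc Pe0' by simp
      qed
    qed
    finally show "A' $$ (i,j) = (Pe * dg ds * transpose_mat Pe) $$ (i,j)" by simp
  qed (use A'c Pec lds in auto)
  define P where "P = H * Pe"
  have Pc: "P \<in> carrier_mat n n" unfolding P_def using Hc Pec by simp
  have PT: "transpose_mat P = transpose_mat Pe * H"
    unfolding P_def using transpose_mult[OF Hc Pec] HT by simp
  have PeTc: "transpose_mat Pe \<in> carrier_mat n n" using Pec by simp
  have Dc: "dg ds \<in> carrier_mat n n" using dg_carrier[of ds] lds by simp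
  have "transpose_mat P * P = transpose_mat Pe * ((H * H) * Pe)"
    unfolding PT unfolding P_def using Hc Pec PeTc by (simp add: assoc_mult_mat[of _ n n _ n _ n])
  also have "\<dots> = 1\<^sub>m n" unfolding HH using Pec PeO by simp
  finally have PO: "transpose_mat P * P = 1\<^sub>m n" .
  have "P * dg ds * transpose_mat P = H * (Pe * dg ds * transpose_mat Pe) * H"
    unfolding PT unfolding P_def using Hc Pec PeTc Dc by (simp add: assoc_mult_mat[of _ n n _ n _ n])
  also have "\<dots> = (H * H) * A * (H * H)"
    unfolding A'eq[symmetric] A'_def using Hc A by (simp add: assoc_mult_mat[of _ n n _ n _ n])
  also have "\<dots> = A" unfolding HH using A by simp
  finally have "A = P * dg ds * transpose_mat P" by simp
  thus ?case using Pc PO lds unfolding n_def by blast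
qed

definition Qf :: "'a set \<Rightarrow> ('a \<Rightarrow> 'a \<Rightarrow> bool) \<Rightarrow> ('a \<Rightarrow> real) \<Rightarrow> real" where
  "Qf S E f = (\<Sum>u\<in>S. \<Sum>w\<in>S. if E u w then f u * f w else 0)"

definition sqf :: "'a set \<Rightarrow> ('a \<Rightarrow> real) \<Rightarrow> real" where
  "sqf S f = (\<Sum>u\<in>S. (f u)^2)"

lemma sum_reindex_sorted:
  assumes "finite S"
  shows "(\<Sum>u\<in>S. g u) = (\<Sum>k<card S. g (sorted_list_of_set S ! k))"
proof -
  have "bij_betw ((!) (sorted_list_of_set S)) {..<card S} S"
    by (rule bij_betw_nth) (use assms in auto)
  thus ?thesis by (simp add: sum.reindex_bij_betw)
qed

lemma sum_swap3:
  "(\<Sum>i\<in>A. \<Sum>k\<in>B. \<Sum>l\<in>C. F i k l) = (\<Sum>k\<in>B. \<Sum>l\<in>C. \<Sum>i\<in>A. (F i k l :: real))"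
  by (rule trans[OF sum.swap]) (rule sum.cong[OF refl], rule sum.swap)

lemma proots_lin: "proots (\<Prod>a\<leftarrow>ds. [:-a,1:]) = mset (ds :: real list)"
proof (induction ds)
  case Nil thus ?case by simp
next
  case (Cons a ds)
  have "monic (\<Prod>a\<leftarrow>ds. [:-a,1:] :: real poly)" by (rule monic_prod_list) auto
  hence nz: "(\<Prod>a\<leftarrow>ds. [:-a,1:]) \<noteq> (0 :: real poly)" by fastforce
  have "proots (\<Prod>a\<leftarrow>a#ds. [:-a,1:]) = proots ([:-a,1:] * (\<Prod>a\<leftarrow>ds. [:-a,1:]))"
    by (simp only: list.map prod_list.Cons)
  also have "\<dots> = proots [:-a,1:] + proots (\<Prod>a\<leftarrow>ds. [:-a,1:])"
    by (rule proots_mult) (use nz in auto)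
  also have "proots [:-a,1:] = {#a#}" using proots_linear_factor[of "-a"] by simp
  finally show ?case using Cons by simp
qed

lemma spec_fun:
  fixes S :: "'a::linorder set"
  assumes fin: "finite S" and sym: "\<And>u w. E u w \<Longrightarrow> E w u"
  shows "\<exists>ds \<phi>. length ds = card S \<and> spectrum_mset S E = mset ds \<and>
     (\<forall>i<card S. \<forall>j<card S. (\<Sum>u\<in>S. \<phi> i u * \<phi> j u) = (if i = j then 1 else 0)) \<and>
     (\<forall>f. Qf S E f = (\<Sum>i<card S. ds!i * (\<Sum>u\<in>S. \<phi> i u * f u)^2)) \<and>
     (\<forall>f. sqf S f = (\<Sum>i<card S. (\<Sum>u\<in>S. \<phi> i u * f u)^2))"
proof -
  define n where "n = card S"
  define vs where "vs = sorted_list_of_set S"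
  have lvs: "length vs = n" unfolding vs_def n_def by simp
  have dvs: "distinct vs" unfolding vs_def by simp
  have svs: "set vs = S" unfolding vs_def using fin by simp
  define Aj where "Aj = adj_matrix S E"
  have Ajc: "Aj \<in> carrier_mat n n" unfolding Aj_def adj_matrix_def n_def by (simp add: Let_def)
  have Ajij: "Aj$$(i,j) = (if E (vs!i) (vs!j) then 1 else 0)" if "i<n" "j<n" for i j
    unfolding Aj_def adj_matrix_def vs_def using that by (simp add: Let_def n_def)
  have Ajsym: "Aj$$(i,j) = Aj$$(j,i)" if "i<n" "j<n" for i j
    using Ajij[OF that] Ajij[of j i] that sym by auto
  obtain P ds where Pc: "P \<in> carrier_mat n n" and PTP: "transpose_mat P * P = 1\<^sub>m n"
    and lds: "length ds = n" and Aeq: "Aj = P * dg ds * transpose_mat P"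
    using spectral[OF Ajc Ajsym] by blast
  have PTc: "transpose_mat P \<in> carrier_mat n n" using Pc by simp
  have PPT: "P * transpose_mat P = 1\<^sub>m n" by (rule mat_mult_left_right_inverse[OF PTc Pc PTP])
  have ORTH: "(\<Sum>k<n. P$$(k,i) * P$$(k,j)) = (if i = j then 1 else 0)" if "i<n" "j<n" for i j
    using mult_entry[OF PTc Pc that] that Pc arg_cong[OF PTP, of "\<lambda>M. M $$ (i,j)"] by simp
  have ORTH2: "(\<Sum>i<n. P$$(k,i) * P$$(l,i)) = (if k = l then 1 else 0)" if "k<n" "l<n" for k l
    using mult_entry[OF Pc PTc that] that Pc arg_cong[OF PPT, of "\<lambda>M. M $$ (k,l)"] by simp
  have Dc: "dg ds \<in> carrier_mat n n" using dg_carrier[of ds] lds by simp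
  have "similar_mat_wit Aj (dg ds) P (transpose_mat P)"
    unfolding similar_mat_wit_def Let_def using Ajc Dc Pc PTc PPT PTP Aeq by auto
  hence "similar_mat Aj (dg ds)" unfolding similar_mat_def by blast
  hence "char_poly Aj = char_poly (dg ds)" by (rule char_poly_similar)
  also have "\<dots> = (\<Prod>a\<leftarrow>diag_mat (dg ds). [:-a,1:])"
    by (rule char_poly_upper_triangular[OF Dc]) (auto simp: upper_triangular_def dg_def)
  also have "diag_mat (dg ds) = ds"
    by (rule nth_equalityI) (auto simp: diag_mat_def dg_def)
  finally have spec: "spectrum_mset S E = mset ds"
    unfolding spectrum_mset_def Aj_def[symmetric] by (simp add: proots_lin)
  define idx where "idx u = (THE k. k < n \<and> vs!k = u)" for u
  have idx: "idx (vs!k) = k" if "k < n" for k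
    unfolding idx_def
    by (rule the_equality) (use that dvs lvs in \<open>auto simp: nth_eq_iff_index_eq\<close>)
  define \<phi> where "\<phi> i u = (if u \<in> S then P $$ (idx u, i) else 0)" for i u
  have vsS: "vs ! k \<in> S" if "k < n" for k using that svs lvs nth_mem by blast
  have phik: "\<phi> i (vs!k) = P $$ (k, i)" if "k < n" for i k
    unfolding \<phi>_def using vsS[OF that] idx[OF that] by simp
  have reidx: "(\<Sum>u\<in>S. g u) = (\<Sum>k<n. g (vs!k))" for g :: "'a \<Rightarrow> real"
    unfolding n_def vs_def by (rule sum_reindex_sorted[OF fin])
  have cf: "(\<Sum>u\<in>S. \<phi> i u * f u) = (\<Sum>k<n. P$$(k,i) * f (vs!k))" for i f
    unfolding reidx by (intro sum.cong refl) (simp add: phik)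
  have orth: "\<forall>i<n. \<forall>j<n. (\<Sum>u\<in>S. \<phi> i u * \<phi> j u) = (if i = j then 1 else 0)"
  proof (intro allI impI)
    fix i j assume "i < n" "j < n"
    have "(\<Sum>u\<in>S. \<phi> i u * \<phi> j u) = (\<Sum>k<n. P$$(k,i) * P$$(k,j))"
      unfolding cf by (intro sum.cong refl) (simp add: phik)
    thus "(\<Sum>u\<in>S. \<phi> i u * \<phi> j u) = (if i = j then 1 else 0)" using ORTH \<open>i<n\<close> \<open>j<n\<close> by simp
  qed
  have Qx: "Qf S E f = (\<Sum>i<n. ds!i * (\<Sum>u\<in>S. \<phi> i u * f u)^2)" for f
  proof -
    define x where "x k = f (vs!k)" for k
    have "Qf S E f = (\<Sum>k<n. \<Sum>l<n. Aj$$(k,l) * x k * x l)"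
      unfolding Qf_def reidx x_def by (intro sum.cong refl) (simp add: Ajij)
    also have "\<dots> = (\<Sum>k<n. \<Sum>l<n. \<Sum>i<n. ds!i * P$$(k,i) * P$$(l,i) * x k * x l)"
    proof (intro sum.cong refl)
      fix k l assume "k \<in> {..<n}" "l \<in> {..<n}"
      hence "k < n" "l < n" by auto
      have "Aj$$(k,l) = (\<Sum>i<n. P$$(k,i) * ds!i * P$$(l,i))"
        unfolding Aeq by (rule PDPt_entry[OF Pc lds \<open>k<n\<close> \<open>l<n\<close>])
      thus "Aj$$(k,l) * x k * x l = (\<Sum>i<n. ds!i * P$$(k,i) * P$$(l,i) * x k * x l)"
        by (simp add: sum_distrib_left sum_distrib_right mult_ac)
    qed
    also have "\<dots> = (\<Sum>i<n. \<Sum>k<n. \<Sum>l<n. ds!i * P$$(k,i) * P$$(l,i) * x k * x l)"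
      by (rule sum_swap3[symmetric])
    also have "\<dots> = (\<Sum>i<n. ds!i * (\<Sum>k<n. P$$(k,i) * x k)^2)"
      by (simp add: power2_eq_square sum_product sum_distrib_left mult_ac)
    finally show ?thesis unfolding cf x_def .
  qed
  have Sx: "sqf S f = (\<Sum>i<n. (\<Sum>u\<in>S. \<phi> i u * f u)^2)" for f
  proof -
    define x where "x k = f (vs!k)" for k
    have "(\<Sum>i<n. (\<Sum>k<n. P$$(k,i) * x k)^2) = (\<Sum>i<n. \<Sum>k<n. \<Sum>l<n. P$$(k,i) * P$$(l,i) * x k * x l)"
      by (simp add: power2_eq_square sum_product sum_distrib_left mult_ac)
    also have "\<dots> = (\<Sum>k<n. \<Sum>l<n. \<Sum>i<n. P$$(k,i) * P$$(l,i) * x k * x l)"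
      by (rule sum_swap3)
    also have "\<dots> = (\<Sum>k<n. \<Sum>l<n. (if k = l then x k * x l else 0))"
    proof (intro sum.cong refl)
      fix k l assume "k \<in> {..<n}" "l \<in> {..<n}"
      hence "k < n" "l < n" by auto
      have "(\<Sum>i<n. P$$(k,i) * P$$(l,i) * x k * x l) = (\<Sum>i<n. P$$(k,i) * P$$(l,i)) * (x k * x l)"
        by (simp add: sum_distrib_right mult.assoc)
      thus "(\<Sum>i<n. P$$(k,i) * P$$(l,i) * x k * x l) = (if k = l then x k * x l else 0)"
        using ORTH2[OF \<open>k<n\<close> \<open>l<n\<close>] by simp
    qed
    also have "\<dots> = (\<Sum>k<n. (x k)^2)" by (simp add: sum.delta power2_eq_square)
    also have "\<dots> = sqf S f" unfolding sqf_def reidx x_def ..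
    finally show ?thesis unfolding cf x_def by simp
  qed
  show ?thesis using lds spec orth Qx Sx unfolding n_def by blast
qed

lemma sorted_desc_facts:
  fixes ds :: "real list"
  assumes "ds \<noteq> []"
  shows "rev (sorted_list_of_multiset (mset ds)) ! 0 \<in> set ds"
    and "\<And>d. d \<in> set ds \<Longrightarrow> d \<le> rev (sorted_list_of_multiset (mset ds)) ! 0"
proof -
  define ys where "ys = sort ds"
  have ly: "length ys = length ds" unfolding ys_def by simp
  have sy: "sorted ys" unfolding ys_def by simp
  have sety: "set ys = set ds" unfolding ys_def by simp
  have n: "length ys > 0" using assms ly by simp
  have e: "rev (sorted_list_of_multiset (mset ds)) ! 0 = ys ! (length ys - 1)"
    unfolding sorted_list_of_multiset_mset ys_def[symmetric] using n by (simp add: rev_nth)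
  show "rev (sorted_list_of_multiset (mset ds)) ! 0 \<in> set ds"
    unfolding e sety[symmetric] using n by simp
  fix d assume "d \<in> set ds"
  then obtain k where k: "k < length ys" "ys ! k = d" unfolding sety[symmetric] by (metis in_set_conv_nth)
  have "ys ! k \<le> ys ! (length ys - 1)" by (rule sorted_nth_mono[OF sy]) (use k in auto)
  thus "d \<le> rev (sorted_list_of_multiset (mset ds)) ! 0" unfolding e using k by simp
qed

lemma coef_delta:
  assumes "\<forall>i<n. \<forall>j<n. (\<Sum>u\<in>S. \<phi> i u * \<phi> j u) = (if i = j then 1 else (0::real))" "j < n" "k < n"
  shows "(\<Sum>u\<in>S. \<phi> k u * \<phi> j u) = (if k = j then 1 else 0)"
  using assms by blast

lemma sum_delta_sq: "i0 < (n::nat) \<Longrightarrow> (\<Sum>k<n. w k * (if k = i0 then 1 else 0)^2) = (w i0 :: real)"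
proof -
  assume "i0 < n"
  have "(\<Sum>k<n. w k * (if k = i0 then 1 else 0)^2) = (\<Sum>k<n. if k = i0 then w k else 0)"
    by (intro sum.cong) auto
  thus ?thesis using \<open>i0 < n\<close> by (simp add: sum.delta')
qed

lemma gi_facts:
  fixes S :: "'a::linorder set"
  assumes fin: "finite S" and sym: "\<And>u w. E u w \<Longrightarrow> E w u" and ne: "S \<noteq> {}"
  shows "\<forall>f. Qf S E f \<le> graph_index S E * sqf S f"
    and "\<exists>f. sqf S f = 1 \<and> Qf S E f = graph_index S E"
proof -
  obtain ds \<phi> where lds: "length ds = card S" and spec: "spectrum_mset S E = mset ds"
    and orth: "\<forall>i<card S. \<forall>j<card S. (\<Sum>u\<in>S. \<phi> i u * \<phi> j u) = (if i = j then 1 else 0)"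
    and Qx: "\<forall>f. Qf S E f = (\<Sum>i<card S. ds!i * (\<Sum>u\<in>S. \<phi> i u * f u)^2)"
    and Sx: "\<forall>f. sqf S f = (\<Sum>i<card S. (\<Sum>u\<in>S. \<phi> i u * f u)^2)"
    using spec_fun[of S E, OF fin sym] by blast
  have n: "card S > 0" using fin ne by (simp add: card_gt_0_iff)
  have dsne: "ds \<noteq> []" using lds n by auto
  have gi: "graph_index S E = rev (sorted_list_of_multiset (mset ds)) ! 0"
    unfolding graph_index_def eigs_def spec ..
  have le: "ds ! i \<le> graph_index S E" if "i < card S" for i
    unfolding gi by (rule sorted_desc_facts(2)[OF dsne]) (use that lds in simp)
  show "\<forall>f. Qf S E f \<le> graph_index S E * sqf S f"
  proof
    fix f
    have "Qf S E f = (\<Sum>i<card S. ds!i * (\<Sum>u\<in>S. \<phi> i u * f u)^2)" using Qx by blast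
    also have "\<dots> \<le> (\<Sum>i<card S. graph_index S E * (\<Sum>u\<in>S. \<phi> i u * f u)^2)"
      by (intro sum_mono mult_right_mono) (auto simp: le)
    also have "\<dots> = graph_index S E * sqf S f" using Sx by (simp add: sum_distrib_left)
    finally show "Qf S E f \<le> graph_index S E * sqf S f" .
  qed
  have "graph_index S E \<in> set ds" unfolding gi by (rule sorted_desc_facts(1)[OF dsne])
  then obtain i0 where i0: "i0 < card S" "ds ! i0 = graph_index S E" using lds by (metis in_set_conv_nth)
  have c: "(\<Sum>u\<in>S. \<phi> k u * \<phi> i0 u) = (if k = i0 then 1 else 0)" if "k < card S" for k
    using orth that i0 by blast
  have "Qf S E (\<phi> i0) = (\<Sum>k<card S. ds!k * (if k = i0 then 1 else 0)^2)"
    using Qx by (simp add: c)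
  also have "\<dots> = graph_index S E" using i0 by (simp add: sum_delta_sq)
  finally have q: "Qf S E (\<phi> i0) = graph_index S E" .
  have "sqf S (\<phi> i0) = (\<Sum>k<card S. 1 * (if k = i0 then 1 else 0)^2)"
    using Sx by (simp add: c)
  also have "\<dots> = 1" using i0 by (simp only: sum_delta_sq)
  finally show "\<exists>f. sqf S f = 1 \<and> Qf S E f = graph_index S E" using q by blast
qed

lemma eig_fun:
  fixes S :: "'a::linorder set"
  assumes fin: "finite S" and sym: "\<And>u w. E u w \<Longrightarrow> E w u" and mu: "\<mu> \<in># spectrum_mset S E"
  shows "\<exists>f. sqf S f = 1 \<and> Qf S E f = \<mu>"
proof -
  obtain ds \<phi> where lds: "length ds = card S" and spec: "spectrum_mset S E = mset ds"
    and orth: "\<forall>i<card S. \<forall>j<card S. (\<Sum>u\<in>S. \<phi> i u * \<phi> j u) = (if i = j then 1 else 0)"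
    and Qx: "\<forall>f. Qf S E f = (\<Sum>i<card S. ds!i * (\<Sum>u\<in>S. \<phi> i u * f u)^2)"
    and Sx: "\<forall>f. sqf S f = (\<Sum>i<card S. (\<Sum>u\<in>S. \<phi> i u * f u)^2)"
    using spec_fun[of S E, OF fin sym] by blast
  have "\<mu> \<in> set ds" using mu spec by simp
  then obtain i0 where i0: "i0 < card S" "ds ! i0 = \<mu>" using lds by (metis in_set_conv_nth)
  have c: "(\<Sum>u\<in>S. \<phi> k u * \<phi> i0 u) = (if k = i0 then 1 else 0)" if "k < card S" for k
    using orth that i0 by blast
  have "Qf S E (\<phi> i0) = (\<Sum>k<card S. ds!k * (if k = i0 then 1 else 0)^2)"
    using Qx by (simp add: c)
  also have "\<dots> = \<mu>" using i0 by (simp add: sum_delta_sq)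
  finally have q: "Qf S E (\<phi> i0) = \<mu>" .
  have "sqf S (\<phi> i0) = (\<Sum>k<card S. 1 * (if k = i0 then 1 else 0)^2)"
    using Sx by (simp add: c)
  also have "\<dots> = 1" using i0 by (simp only: sum_delta_sq)
  finally show ?thesis using q by blast
qed

lemma coef_lin: "(\<Sum>u\<in>S. p u * (a * f u + b * g u)) = a * (\<Sum>u\<in>S. p u * f u) + b * (\<Sum>u\<in>S. p u * (g u::real))"
  by (simp add: sum.distrib sum_distrib_left algebra_simps)

lemma size_filter_card:
  "size (filter_mset P (mset ds)) = card {i. i < length ds \<and> P (ds!i)}"
  by (metis length_filter_conv_card mset_filter size_mset)

lemma two_elems: assumes "2 \<le> card A" shows "\<exists>x y. x \<in> A \<and> y \<in> A \<and> x \<noteq> y"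
proof -
  have "finite A" using assms by (metis card.infinite not_numeral_le_zero)
  have "A \<noteq> {}" using assms by auto
  then obtain x where x: "x \<in> A" by blast
  have "card (A - {x}) \<ge> 1" using assms x \<open>finite A\<close> by (simp add: card_Diff_singleton)
  have "A - {x} \<noteq> {}"
  proof
    assume h: "A - {x} = {}"
    have "card (A - {x}) = 0" unfolding h by (rule card.empty)
    thus False using \<open>card (A - {x}) \<ge> 1\<close> by simp
  qed
  then obtain y where "y \<in> A - {x}" by blast
  thus ?thesis using x by blast
qed

lemma two_eig_imp:
  fixes S :: "'a::linorder set"
  assumes fin: "finite S" and sym: "\<And>u w. E u w \<Longrightarrow> E w u"
    and two: "2 \<le> size (filter_mset (\<lambda>\<mu>. \<mu> > t) (spectrum_mset S E))"
  shows "\<exists>f g. \<forall>a b. (a,b) \<noteq> (0,0) \<longrightarrow>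
           Qf S E (\<lambda>u. a * f u + b * g u) > t * sqf S (\<lambda>u. a * f u + b * g u)"
proof -
  obtain ds \<phi> where lds: "length ds = card S" and spec: "spectrum_mset S E = mset ds"
    and orth: "\<forall>i<card S. \<forall>j<card S. (\<Sum>u\<in>S. \<phi> i u * \<phi> j u) = (if i = j then 1 else 0)"
    and Qx: "\<forall>f. Qf S E f = (\<Sum>i<card S. ds!i * (\<Sum>u\<in>S. \<phi> i u * f u)^2)"
    and Sx: "\<forall>f. sqf S f = (\<Sum>i<card S. (\<Sum>u\<in>S. \<phi> i u * f u)^2)"
    using spec_fun[of S E, OF fin sym] by blast
  have "2 \<le> card {i. i < length ds \<and> ds!i > t}" using two unfolding spec size_filter_card .
  from two_elems[OF this] obtain i j where "i \<in> {i. i < length ds \<and> ds!i > t}"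
    "j \<in> {i. i < length ds \<and> ds!i > t}" "i \<noteq> j" by blast
  hence ij: "i < card S" "ds!i > t" "j < card S" "ds!j > t" "i \<noteq> j" using lds by auto
  show ?thesis
  proof (intro exI allI impI)
    fix a b :: real assume ab: "(a,b) \<noteq> (0,0)"
    let ?h = "\<lambda>u. a * \<phi> i u + b * \<phi> j u"
    have c: "(\<Sum>u\<in>S. \<phi> k u * ?h u) = a * (if k = i then 1 else 0) + b * (if k = j then 1 else 0)"
      if "k < card S" for k
      unfolding coef_lin using orth that ij by simp
    have Q: "Qf S E ?h = a^2 * ds!i + b^2 * ds!j"
    proof -
      have "Qf S E ?h = (\<Sum>k<card S. ds!k * (a * (if k = i then 1 else 0) + b * (if k = j then 1 else 0))^2)"
        using Qx by (simp add: c)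
      also have "\<dots> = (\<Sum>k<card S. (if k = i then a^2 * ds!k else 0) + (if k = j then b^2 * ds!k else 0))"
        by (intro sum.cong refl) (use ij in \<open>auto simp: power2_eq_square\<close>)
      also have "\<dots> = a^2 * ds!i + b^2 * ds!j" using ij by (simp add: sum.distrib sum.delta')
      finally show ?thesis .
    qed
    have Sq: "sqf S ?h = a^2 + b^2"
    proof -
      have "sqf S ?h = (\<Sum>k<card S. (a * (if k = i then 1 else 0) + b * (if k = j then 1 else 0))^2)"
        using Sx by (simp add: c)
      also have "\<dots> = (\<Sum>k<card S. (if k = i then a^2 else 0) + (if k = j then b^2 else 0))"
        by (intro sum.cong refl) (use ij in \<open>auto simp: power2_eq_square\<close>)
      also have "\<dots> = a^2 + b^2" using ij by (simp add: sum.distrib sum.delta')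
      finally show ?thesis .
    qed
    have "a^2 * (ds!i - t) + b^2 * (ds!j - t) > 0"
    proof (cases "a = 0")
      case True
      hence "b \<noteq> 0" using ab by auto
      hence "b^2 * (ds!j - t) > 0" using ij by simp
      thus ?thesis using True by simp
    next
      case False
      hence "a^2 * (ds!i - t) > 0" using ij by simp
      moreover have "b^2 * (ds!j - t) \<ge> 0" using ij by simp
      ultimately show ?thesis by linarith
    qed
    thus "Qf S E ?h > t * sqf S ?h" unfolding Q Sq by (simp add: algebra_simps)
  qed
qed

lemma two_pos_imp:
  fixes S :: "'a::linorder set"
  assumes fin: "finite S" and sym: "\<And>u w. E u w \<Longrightarrow> E w u"
    and pos: "\<forall>a b. (a,b) \<noteq> (0,0) \<longrightarrow>
           Qf S E (\<lambda>u. a * f u + b * g u) > t * sqf S (\<lambda>u. a * f u + b * g u)"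
  shows "2 \<le> size (filter_mset (\<lambda>\<mu>. \<mu> > t) (spectrum_mset S E))"
proof (rule ccontr)
  obtain ds \<phi> where lds: "length ds = card S" and spec: "spectrum_mset S E = mset ds"
    and Qx: "\<forall>f. Qf S E f = (\<Sum>i<card S. ds!i * (\<Sum>u\<in>S. \<phi> i u * f u)^2)"
    and Sx: "\<forall>f. sqf S f = (\<Sum>i<card S. (\<Sum>u\<in>S. \<phi> i u * f u)^2)"
    using spec_fun[of S E, OF fin sym] by blast
  assume "\<not> 2 \<le> size (filter_mset (\<lambda>\<mu>. \<mu> > t) (spectrum_mset S E))"
  hence c1: "card {i. i < length ds \<and> ds!i > t} \<le> 1" unfolding spec size_filter_card by simp
  have "\<exists>i0. \<forall>k<card S. k \<noteq> i0 \<longrightarrow> ds!k \<le> t"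
  proof (cases "{i. i < length ds \<and> ds!i > t} = {}")
    case True thus ?thesis using lds by force
  next
    case False
    then obtain i0 where i0: "i0 \<in> {i. i < length ds \<and> ds!i > t}" by blast
    have "\<forall>x\<in>{i. i < length ds \<and> ds!i > t}. \<forall>y\<in>{i. i < length ds \<and> ds!i > t}. x = y"
      using c1 by (subst card_le_Suc0_iff_eq[symmetric]) auto
    hence "\<forall>k<card S. k \<noteq> i0 \<longrightarrow> ds!k \<le> t" using i0 lds by force
    thus ?thesis by blast
  qed
  then obtain i0 where i0: "\<forall>k<card S. k \<noteq> i0 \<longrightarrow> ds!k \<le> t" by blast
  define cf where "cf = (\<Sum>u\<in>S. \<phi> i0 u * f u)"
  define cg where "cg = (\<Sum>u\<in>S. \<phi> i0 u * g u)"
  define a where "a = (if cf = 0 \<and> cg = 0 then 1 else cg)"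
  define b where "b = (if cf = 0 \<and> cg = 0 then 0 else - cf)"
  have ab: "(a,b) \<noteq> (0,0)" unfolding a_def b_def by auto
  have ab0: "a * cf + b * cg = 0" unfolding a_def b_def by auto
  let ?h = "\<lambda>u. a * f u + b * g u"
  have ch: "(\<Sum>u\<in>S. \<phi> i0 u * ?h u) = 0" unfolding coef_lin cf_def[symmetric] cg_def[symmetric] by (rule ab0)
  have "Qf S E ?h = (\<Sum>k<card S. ds!k * (\<Sum>u\<in>S. \<phi> k u * ?h u)^2)" using Qx by blast
  also have "\<dots> \<le> (\<Sum>k<card S. t * (\<Sum>u\<in>S. \<phi> k u * ?h u)^2)"
  proof (intro sum_mono)
    fix k assume "k \<in> {..<card S}"
    show "ds!k * (\<Sum>u\<in>S. \<phi> k u * ?h u)^2 \<le> t * (\<Sum>u\<in>S. \<phi> k u * ?h u)^2"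
    proof (cases "k = i0")
      case True thus ?thesis using ch by simp
    next
      case False thus ?thesis using i0 \<open>k \<in> {..<card S}\<close> by (intro mult_right_mono) auto
    qed
  qed
  also have "\<dots> = t * sqf S ?h" using Sx by (simp add: sum_distrib_left)
  finally have "Qf S E ?h \<le> t * sqf S ?h" .
  moreover have "Qf S E ?h > t * sqf S ?h" using pos ab by blast
  ultimately show False by linarith
qed

lemma second_gt:
  assumes "2 \<le> size (filter_mset (\<lambda>\<mu>. \<mu> > 2) (spectrum_mset S E))"
  shows "second_eig S E > 2"
proof -
  define ys where "ys = sorted_list_of_multiset (spectrum_mset S E)"
  have my: "mset ys = spectrum_mset S E" unfolding ys_def by simp
  have sy: "sorted ys" unfolding ys_def by simp
  define n where "n = length ys"
  have c2: "2 \<le> card {i. i < n \<and> ys!i > (2::real)}"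
    using assms unfolding my[symmetric] size_filter_card n_def .
  have sub: "{i. i < n \<and> ys!i > (2::real)} \<subseteq> {..<n}" by auto
  have "card {i. i < n \<and> ys!i > (2::real)} \<le> n" using card_mono[OF _ sub] by simp
  hence n2: "n \<ge> 2" using c2 by linarith
  have se: "second_eig S E = ys ! (n - 2)"
    unfolding second_eig_def eigs_def ys_def[symmetric] using n2 by (simp add: rev_nth n_def numeral_2_eq_2)
  show ?thesis
  proof (rule ccontr)
    assume "\<not> ?thesis"
    hence le: "ys ! (n-2) \<le> 2" unfolding se by simp
    have "{i. i < n \<and> ys!i > (2::real)} \<subseteq> {n-1}"
    proof
      fix i assume i: "i \<in> {i. i < n \<and> ys!i > (2::real)}"
      have "i = n - 1"
      proof (rule ccontr)
        assume "i \<noteq> n - 1"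
        hence "i \<le> n - 2" using i by auto
        hence "ys ! i \<le> ys ! (n-2)" by (intro sorted_nth_mono[OF sy]) (use n2 n_def in auto)
        thus False using i le by auto
      qed
      thus "i \<in> {n-1}" by simp
    qed
    hence "card {i. i < n \<and> ys!i > (2::real)} \<le> 1" using card_mono[of "{n-1}"] by fastforce
    thus False using c2 by linarith
  qed
qed

definition Rs :: "'a set \<Rightarrow> ('a \<Rightarrow> 'a \<Rightarrow> bool) \<Rightarrow> bool" where
  "Rs S E \<longleftrightarrow> (\<exists>f. Qf S E f > 2 * sqf S f)"

definition nbr :: "'a set \<Rightarrow> ('a \<Rightarrow> 'a \<Rightarrow> bool) \<Rightarrow> 'a \<Rightarrow> 'a set" where
  "nbr S E u = {w \<in> S. E u w}"

definition dgS :: "'a set \<Rightarrow> ('a \<Rightarrow> 'a \<Rightarrow> bool) \<Rightarrow> 'a \<Rightarrow> nat" where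
  "dgS S E u = card (nbr S E u)"

lemma degree_dgS: "degree V E v = dgS V E v"
  unfolding degree_def dgS_def nbr_def ..

lemma sqf_nonneg: "sqf S f \<ge> 0"
  unfolding sqf_def by (intro sum_nonneg) auto

lemma restrict_sum:
  assumes "finite S" "T \<subseteq> S" "\<And>u. u \<in> S - T \<Longrightarrow> g u = 0"
  shows "(\<Sum>u\<in>S. g u) = (\<Sum>u\<in>T. (g u :: real))"
  using assms by (intro sum.mono_neutral_right) auto

lemma Qf_restrict:
  assumes "finite S" "T \<subseteq> S"
  shows "Qf S E (\<lambda>u. if u \<in> T then f u else 0) = Qf T E f"
proof -
  have "Qf S E (\<lambda>u. if u \<in> T then f u else 0) =
        (\<Sum>u\<in>S. \<Sum>w\<in>S. if E u w then (if u \<in> T then f u else 0) * (if w \<in> T then f w else 0) else 0)"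
    unfolding Qf_def ..
  also have "\<dots> = (\<Sum>u\<in>T. \<Sum>w\<in>S. if E u w then (if u \<in> T then f u else 0) * (if w \<in> T then f w else 0) else 0)"
    by (rule restrict_sum) (use assms in \<open>auto intro!: sum.neutral\<close>)
  also have "\<dots> = (\<Sum>u\<in>T. \<Sum>w\<in>T. if E u w then (if u \<in> T then f u else 0) * (if w \<in> T then f w else 0) else 0)"
    by (intro sum.cong refl restrict_sum) (use assms in auto)
  also have "\<dots> = Qf T E f" unfolding Qf_def by (intro sum.cong refl) auto
  finally show ?thesis .
qed

lemma sqf_restrict:
  assumes "finite S" "T \<subseteq> S"
  shows "sqf S (\<lambda>u. if u \<in> T then f u else 0) = sqf T f"
proof -
  have "sqf S (\<lambda>u. if u \<in> T then f u else 0) = (\<Sum>u\<in>T. (if u \<in> T then f u else 0)^2)"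
    unfolding sqf_def by (rule restrict_sum) (use assms in auto)
  thus ?thesis unfolding sqf_def by simp
qed

lemma Rs_mono:
  assumes "finite S" "T \<subseteq> S" "Rs T E"
  shows "Rs S E"
proof -
  obtain f where "Qf T E f > 2 * sqf T f" using assms(3) unfolding Rs_def by blast
  thus ?thesis unfolding Rs_def using Qf_restrict[OF assms(1,2)] sqf_restrict[OF assms(1,2)]
    by metis
qed

lemma Rs_empty: "\<not> Rs {} E"
  unfolding Rs_def Qf_def sqf_def by simp

lemma Rs_single: assumes "\<not> E v v" shows "\<not> Rs {v} E"
  unfolding Rs_def Qf_def sqf_def using assms by simp

lemma Rs_gi:
  fixes S :: "'a::linorder set"
  assumes fin: "finite S" and sym: "\<And>u w. E u w \<Longrightarrow> E w u" and ne: "S \<noteq> {}"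
  shows "Rs S E \<longleftrightarrow> graph_index S E > 2"
proof
  assume "Rs S E"
  then obtain f where f: "Qf S E f > 2 * sqf S f" unfolding Rs_def by blast
  have "Qf S E f \<le> graph_index S E * sqf S f" using gi_facts(1)[of S E, OF fin sym ne] by blast
  show "graph_index S E > 2"
  proof (rule ccontr)
    assume "\<not> ?thesis"
    hence "graph_index S E * sqf S f \<le> 2 * sqf S f" using sqf_nonneg[of S f] by (intro mult_right_mono) auto
    thus False using f \<open>Qf S E f \<le> graph_index S E * sqf S f\<close> by linarith
  qed
next
  assume "graph_index S E > 2"
  moreover obtain f where "sqf S f = 1" "Qf S E f = graph_index S E"
    using gi_facts(2)[of S E, OF fin sym ne] by blast
  ultimately show "Rs S E" unfolding Rs_def by (intro exI[of _ f]) simp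
qed

lemma Qf_abs: "Qf S E (\<lambda>u. \<bar>f u\<bar>) \<ge> - Qf S E f"
proof -
  have "- Qf S E f = (\<Sum>u\<in>S. \<Sum>w\<in>S. if E u w then - (f u * f w) else 0)"
    unfolding Qf_def by (simp add: sum_negf[symmetric] if_distrib cong: if_cong)
  also have "\<dots> \<le> Qf S E (\<lambda>u. \<bar>f u\<bar>)" unfolding Qf_def
    by (intro sum_mono) (auto simp: abs_mult[symmetric])
  finally show ?thesis .
qed

lemma sqf_abs: "sqf S (\<lambda>u. \<bar>f u\<bar>) = sqf S f"
  unfolding sqf_def by simp

lemma disjoint_pair:
  fixes V :: "'a::linorder set"
  assumes fin: "finite V" and sym: "\<And>u w. E u w \<Longrightarrow> E w u"
    and T1: "T1 \<subseteq> V" and T2: "T2 \<subseteq> V" and dis: "T1 \<inter> T2 = {}"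
    and nadj: "\<And>u w. u \<in> T1 \<Longrightarrow> w \<in> T2 \<Longrightarrow> \<not> E u w"
    and R1: "Rs T1 E" and R2: "Rs T2 E"
  shows "second_eig V E > 2"
proof -
  obtain f1 where f1: "Qf T1 E f1 > 2 * sqf T1 f1" using R1 unfolding Rs_def by blast
  obtain f2 where f2: "Qf T2 E f2 > 2 * sqf T2 f2" using R2 unfolding Rs_def by blast
  define F1 where "F1 u = (if u \<in> T1 then f1 u else 0)" for u
  define F2 where "F2 u = (if u \<in> T2 then f2 u else 0)" for u
  have Q1: "Qf V E F1 = Qf T1 E f1" unfolding F1_def by (rule Qf_restrict[OF fin T1])
  have Q2: "Qf V E F2 = Qf T2 E f2" unfolding F2_def by (rule Qf_restrict[OF fin T2])
  have S1: "sqf V F1 = sqf T1 f1" unfolding F1_def by (rule sqf_restrict[OF fin T1])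
  have S2: "sqf V F2 = sqf T2 f2" unfolding F2_def by (rule sqf_restrict[OF fin T2])
  have cross: "E u w \<Longrightarrow> F1 u * F2 w = 0 \<and> F2 u * F1 w = 0" for u w
    unfolding F1_def F2_def using nadj sym by auto
  have "\<forall>a b. (a,b) \<noteq> (0,0) \<longrightarrow> Qf V E (\<lambda>u. a * F1 u + b * F2 u) > 2 * sqf V (\<lambda>u. a * F1 u + b * F2 u)"
  proof (intro allI impI)
    fix a b :: real assume ab: "(a,b) \<noteq> (0,0)"
    have "Qf V E (\<lambda>u. a * F1 u + b * F2 u) =
      (\<Sum>u\<in>V. \<Sum>w\<in>V. a^2 * (if E u w then F1 u * F1 w else 0) + b^2 * (if E u w then F2 u * F2 w else 0))"
      unfolding Qf_def
    proof (intro sum.cong refl)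
      fix u w
      show "(if E u w then (a * F1 u + b * F2 u) * (a * F1 w + b * F2 w) else 0) =
        a^2 * (if E u w then F1 u * F1 w else 0) + b^2 * (if E u w then F2 u * F2 w else 0)"
      proof (cases "E u w")
        case True
        have c1: "F1 u * F2 w = 0" and c2: "F2 u * F1 w = 0" using cross[OF True] by auto
        have "(a * F1 u + b * F2 u) * (a * F1 w + b * F2 w) =
          a^2 * (F1 u * F1 w) + b^2 * (F2 u * F2 w) + a * b * (F1 u * F2 w) + a * b * (F2 u * F1 w)"
          by (simp add: algebra_simps power2_eq_square)
        thus ?thesis using True unfolding c1 c2 by simp
      qed simp
    qed
    also have "\<dots> = a^2 * Qf V E F1 + b^2 * Qf V E F2"
      unfolding Qf_def by (simp add: sum.distrib sum_distrib_left)
    finally have Q: "Qf V E (\<lambda>u. a * F1 u + b * F2 u) = a^2 * Qf T1 E f1 + b^2 * Qf T2 E f2"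
      unfolding Q1 Q2 .
    have "sqf V (\<lambda>u. a * F1 u + b * F2 u) = (\<Sum>u\<in>V. a^2 * (F1 u)^2 + b^2 * (F2 u)^2)"
      unfolding sqf_def
      by (intro sum.cong refl) (use dis in \<open>auto simp: F1_def F2_def power2_eq_square algebra_simps\<close>)
    also have "\<dots> = a^2 * sqf V F1 + b^2 * sqf V F2"
      unfolding sqf_def by (simp add: sum.distrib sum_distrib_left)
    finally have Sq: "sqf V (\<lambda>u. a * F1 u + b * F2 u) = a^2 * sqf T1 f1 + b^2 * sqf T2 f2"
      unfolding S1 S2 .
    have "a^2 * (Qf T1 E f1 - 2 * sqf T1 f1) + b^2 * (Qf T2 E f2 - 2 * sqf T2 f2) > 0"
    proof (cases "a = 0")
      case True
      hence "b \<noteq> 0" using ab by auto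
      thus ?thesis using True f2 by simp
    next
      case False
      hence "a^2 * (Qf T1 E f1 - 2 * sqf T1 f1) > 0" using f1 by simp
      moreover have "b^2 * (Qf T2 E f2 - 2 * sqf T2 f2) \<ge> 0" using f2 by simp
      ultimately show ?thesis by linarith
    qed
    thus "Qf V E (\<lambda>u. a * F1 u + b * F2 u) > 2 * sqf V (\<lambda>u. a * F1 u + b * F2 u)"
      unfolding Q Sq by (simp add: algebra_simps)
  qed
  hence "2 \<le> size (filter_mset (\<lambda>\<mu>. \<mu> > 2) (spectrum_mset V E))"
    using two_pos_imp[where S=V and E=E and f=F1 and g=F2 and t=2, OF fin sym] by blast
  thus ?thesis by (rule second_gt)
qed

lemma gi_in_spec:
  fixes S :: "'a::linorder set"
  assumes fin: "finite S" and sym: "\<And>u w. E u w \<Longrightarrow> E w u" and ne: "S \<noteq> {}"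
  shows "graph_index S E \<in># spectrum_mset S E"
proof -
  obtain ds \<phi> where lds: "length ds = card S" and spec: "spectrum_mset S E = mset ds"
    using spec_fun[of S E, OF fin sym] by blast
  have "ds \<noteq> []" using lds fin ne by auto
  hence "rev (sorted_list_of_multiset (mset ds)) ! 0 \<in> set ds" by (rule sorted_desc_facts(1))
  thus ?thesis unfolding graph_index_def eigs_def spec by simp
qed

lemma part_a:
  fixes V :: "'a::linorder set"
  assumes sg: "simple_graph V E" and cg: "connected_graph V E"
    and gi: "graph_index V E > 2" and se: "second_eig V E \<le> 2"
  shows "\<exists>M A H. M \<union> A \<union> H = V \<and> M \<inter> A = {} \<and> M \<inter> H = {} \<and> A \<inter> H = {}
            \<and> graph_index M E > 2
            \<and> (\<forall>v\<in>M. graph_index (M - {v}) E \<le> 2)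
            \<and> size (filter_mset (\<lambda>\<mu>. \<mu> > 2) (spectrum_mset M E)) = 1
            \<and> A = {v \<in> V - M. \<exists>m\<in>M. E v m}
            \<and> cyclotomic H E"
proof -
  have fin: "finite V" and sym: "\<And>u w. E u w \<Longrightarrow> E w u" and irr: "\<And>v. \<not> E v v"
    using sg unfolding simple_graph_def by auto
  have Vne: "V \<noteq> {}" using cg unfolding connected_graph_def by auto
  have RV: "Rs V E" using Rs_gi[of V E, OF fin sym Vne] gi by simp
  obtain M where MV: "M \<subseteq> V" and RM: "Rs M E"
    and Mmin: "\<And>M'. M' \<subseteq> V \<Longrightarrow> Rs M' E \<Longrightarrow> card M \<le> card M'"
    using ex_has_least_nat[of "\<lambda>M. M \<subseteq> V \<and> Rs M E" V card] RV by blast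
  have Mfin: "finite M" using MV fin by (rule finite_subset)
  have Mne: "M \<noteq> {}" using RM Rs_empty by blast
  have giM: "graph_index M E > 2" using Rs_gi[of M E, OF Mfin sym Mne] RM by simp
  have minor: "graph_index (M - {v}) E \<le> 2" if v: "v \<in> M" for v
  proof -
    have "M \<noteq> {v}" using RM Rs_single[of E v] irr by blast
    hence ne: "M - {v} \<noteq> {}" using v by auto
    have "card M > 0" using v Mfin card_gt_0_iff by blast
    hence "card (M - {v}) < card M" using v Mfin by (simp add: card_Diff_singleton)
    hence "\<not> Rs (M - {v}) E" using Mmin[of "M - {v}"] MV by auto
    thus ?thesis using Rs_gi[of "M - {v}" E, OF _ sym ne] Mfin by auto
  qed
  have size1: "size (filter_mset (\<lambda>\<mu>. \<mu> > 2) (spectrum_mset M E)) = 1"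
  proof -
    have "graph_index M E \<in># filter_mset (\<lambda>\<mu>. \<mu> > 2) (spectrum_mset M E)"
      using gi_in_spec[of M E, OF Mfin sym Mne] giM by simp
    then obtain N' where "filter_mset (\<lambda>\<mu>. \<mu> > 2) (spectrum_mset M E) = add_mset (graph_index M E) N'"
      by (blast dest: multi_member_split)
    hence ge1: "size (filter_mset (\<lambda>\<mu>. \<mu> > 2) (spectrum_mset M E)) \<ge> 1" by simp
    have "\<not> 2 \<le> size (filter_mset (\<lambda>\<mu>. \<mu> > 2) (spectrum_mset M E))"
    proof
      assume "2 \<le> size (filter_mset (\<lambda>\<mu>. \<mu> > 2) (spectrum_mset M E))"
      then obtain f g where fg: "\<forall>a b. (a,b) \<noteq> (0,0) \<longrightarrow>
           Qf M E (\<lambda>u. a * f u + b * g u) > 2 * sqf M (\<lambda>u. a * f u + b * g u)"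
        using two_eig_imp[of M E 2, OF Mfin sym] by blast
      define F where "F u = (if u \<in> M then f u else 0)" for u
      define G where "G u = (if u \<in> M then g u else 0)" for u
      have "\<forall>a b. (a,b) \<noteq> (0,0) \<longrightarrow>
           Qf V E (\<lambda>u. a * F u + b * G u) > 2 * sqf V (\<lambda>u. a * F u + b * G u)"
      proof (intro allI impI)
        fix a b :: real assume "(a,b) \<noteq> (0,0)"
        have e: "(\<lambda>u. a * F u + b * G u) = (\<lambda>u. if u \<in> M then a * f u + b * g u else 0)"
          unfolding F_def G_def by auto
        show "Qf V E (\<lambda>u. a * F u + b * G u) > 2 * sqf V (\<lambda>u. a * F u + b * G u)"
          unfolding e Qf_restrict[OF fin MV] sqf_restrict[OF fin MV] using fg \<open>(a,b) \<noteq> (0,0)\<close> by blast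
      qed
      hence "2 \<le> size (filter_mset (\<lambda>\<mu>. \<mu> > 2) (spectrum_mset V E))"
        using two_pos_imp[where S=V and E=E and f=F and g=G and t=2, OF fin sym] by blast
      hence "second_eig V E > 2" by (rule second_gt)
      thus False using se by simp
    qed
    thus ?thesis using ge1 by linarith
  qed
  define A where "A = {v \<in> V - M. \<exists>m\<in>M. E v m}"
  define H where "H = V - M - A"
  have HV: "H \<subseteq> V" unfolding H_def by auto
  have Hfin: "finite H" using HV fin by (rule finite_subset)
  have nadj: "\<not> E u w" if "u \<in> M" "w \<in> H" for u w
  proof
    assume "E u w"
    hence "E w u" by (rule sym)
    hence "w \<in> A" unfolding A_def using that H_def by auto
    thus False using that H_def by auto
  qed
  have cyc: "cyclotomic H E"
    unfolding cyclotomic_def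
  proof
    fix \<mu> assume mu: "\<mu> \<in># spectrum_mset H E"
    obtain f where f1: "sqf H f = 1" and fq: "Qf H E f = \<mu>" using eig_fun[of H E, OF Hfin sym mu] by blast
    show "-2 \<le> \<mu> \<and> \<mu> \<le> 2"
    proof (rule ccontr)
      assume "\<not> (-2 \<le> \<mu> \<and> \<mu> \<le> 2)"
      hence "\<not> -2 \<le> \<mu> \<or> \<not> \<mu> \<le> 2" by simp
      hence "Rs H E"
      proof (elim disjE)
        assume "\<not> -2 \<le> \<mu>"
        hence "Qf H E (\<lambda>u. \<bar>f u\<bar>) > 2 * sqf H (\<lambda>u. \<bar>f u\<bar>)"
          using Qf_abs[of H E f] unfolding sqf_abs f1 fq by linarith
        thus "Rs H E" unfolding Rs_def by blast
      next
        assume "\<not> \<mu> \<le> 2"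
        thus "Rs H E" unfolding Rs_def using f1 fq by (intro exI[of _ f]) simp
      qed
      hence "second_eig V E > 2"
        using disjoint_pair[of V E M H, OF fin sym MV HV _ nadj RM] unfolding H_def by blast
      thus False using se by simp
    qed
  qed
  have c1: "M \<union> A \<union> H = V" unfolding H_def A_def using MV by auto
  have c2: "M \<inter> A = {}" and c3: "M \<inter> H = {}" and c4: "A \<inter> H = {}" unfolding H_def A_def by auto
  show ?thesis
    by (rule exI[of _ M], rule exI[of _ A], rule exI[of _ H])
       (intro conjI c1 c2 c3 c4 giM ballI minor size1 A_def cyc, assumption)
qed

lemma card_ind: "finite S \<Longrightarrow> real (card {u\<in>S. P u}) = (\<Sum>u\<in>S. if P u then 1 else 0)"
  by (simp add: sum.inter_filter[symmetric])

lemma nbr_fin: "finite S \<Longrightarrow> finite (nbr S E u)" unfolding nbr_def by simp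

lemma Qf_vertex: assumes fin: "finite S" shows "Qf S E f = (\<Sum>u\<in>S. f u * (\<Sum>w\<in>nbr S E u. f w))"
proof -
  have "Qf S E f = (\<Sum>u\<in>S. \<Sum>w\<in>S. f u * (if E u w then f w else 0))"
    unfolding Qf_def by (intro sum.cong refl) simp
  also have "\<dots> = (\<Sum>u\<in>S. f u * (\<Sum>w\<in>nbr S E u. f w))"
    unfolding nbr_def using fin by (simp add: sum_distrib_left[symmetric] sum.inter_filter)
  finally show ?thesis .
qed

lemma sum_adj_fst:
  assumes "finite S"
  shows "(\<Sum>u\<in>S. \<Sum>w\<in>S. if E u w then h u else 0) = (\<Sum>u\<in>S. h u * real (dgS S E u))"
proof (intro sum.cong refl)
  fix u assume "u \<in> S"
  have "(\<Sum>w\<in>S. if E u w then h u else 0) = (\<Sum>w\<in>nbr S E u. h u)"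
    unfolding nbr_def using assms by (simp add: sum.inter_filter[symmetric])
  also have "\<dots> = h u * real (dgS S E u)" unfolding dgS_def by simp
  finally show "(\<Sum>w\<in>S. if E u w then h u else 0) = h u * real (dgS S E u)" .
qed

lemma sum_adj_snd:
  assumes "finite S" and sym: "\<And>u w. E u w \<Longrightarrow> E w u"
  shows "(\<Sum>u\<in>S. \<Sum>w\<in>S. if E u w then h w else 0) = (\<Sum>u\<in>S. h u * real (dgS S E u))"
proof -
  have "(\<Sum>u\<in>S. \<Sum>w\<in>S. if E u w then h w else 0) = (\<Sum>w\<in>S. \<Sum>u\<in>S. if E u w then h w else 0)"
    by (rule sum.swap)
  also have "\<dots> = (\<Sum>w\<in>S. \<Sum>u\<in>S. if E w u then h w else 0)"
    by (intro sum.cong refl) (metis sym)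
  also have "\<dots> = (\<Sum>u\<in>S. h u * real (dgS S E u))" by (rule sum_adj_fst[OF assms(1)])
  finally show ?thesis .
qed

lemma Qf_deg_bound:
  assumes fin: "finite S" and sym: "\<And>u w. E u w \<Longrightarrow> E w u"
  shows "Qf S E f \<le> (\<Sum>u\<in>S. real (dgS S E u) * (f u)^2)"
proof -
  have "Qf S E f \<le> (\<Sum>u\<in>S. \<Sum>w\<in>S. (if E u w then (f u)^2 / 2 else 0) + (if E u w then (f w)^2 / 2 else 0))"
    unfolding Qf_def
  proof (intro sum_mono)
    fix u w
    have "f u * f w \<le> (f u)^2 / 2 + (f w)^2 / 2"
      using sum_squares_bound[of "f u" "f w"] by (simp add: field_simps)
    thus "(if E u w then f u * f w else 0) \<le> (if E u w then (f u)^2 / 2 else 0) + (if E u w then (f w)^2 / 2 else 0)"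
      by simp
  qed
  also have "\<dots> = (\<Sum>u\<in>S. (f u)^2 / 2 * real (dgS S E u)) + (\<Sum>u\<in>S. (f u)^2 / 2 * real (dgS S E u))"
    by (simp only: sum.distrib sum_adj_fst[OF fin] sum_adj_snd[where S=S and E=E, OF fin sym])
  also have "\<dots> = (\<Sum>u\<in>S. real (dgS S E u) * (f u)^2)"
    by (simp add: sum.distrib[symmetric] field_simps)
  finally show ?thesis .
qed

lemma notRs_deg2:
  assumes fin: "finite S" and sym: "\<And>u w. E u w \<Longrightarrow> E w u" and d2: "\<And>u. u \<in> S \<Longrightarrow> dgS S E u \<le> 2"
  shows "\<not> Rs S E"
proof
  assume "Rs S E"
  then obtain f where f: "Qf S E f > 2 * sqf S f" unfolding Rs_def by blast
  have "Qf S E f \<le> (\<Sum>u\<in>S. real (dgS S E u) * (f u)^2)" by (rule Qf_deg_bound[OF fin sym])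
  also have "\<dots> \<le> (\<Sum>u\<in>S. 2 * (f u)^2)" by (intro sum_mono mult_right_mono) (use d2 in auto)
  also have "\<dots> = 2 * sqf S f" unfolding sqf_def by (simp add: sum_distrib_left)
  finally show False using f by simp
qed

lemma rank_inj:
  assumes fin: "finite S" and sym: "\<And>u w. E u w \<Longrightarrow> E w u" and K: "K \<subseteq> S"
    and rk: "\<And>u. u \<in> S - K \<Longrightarrow> \<exists>w\<in>S. E u w \<and> rk w < (rk u :: nat)"
  shows "2 * (card S - card K) \<le> (\<Sum>u\<in>S. dgS S E u)"
proof -
  define p where "p u = (SOME w. w \<in> S \<and> E u w \<and> rk w < rk u)" for u
  have p: "p u \<in> S \<and> E u (p u) \<and> rk (p u) < rk u" if "u \<in> S - K" for u
    unfolding p_def by (rule someI_ex) (use rk[OF that] in blast)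
  define Pr where "Pr = Sigma S (nbr S E)"
  have cPr: "card Pr = (\<Sum>u\<in>S. dgS S E u)"
    unfolding Pr_def dgS_def by (rule card_SigmaI) (use fin nbr_fin in auto)
  have fPr: "finite Pr" unfolding Pr_def using fin nbr_fin[OF fin] by (intro finite_SigmaI) auto
  define F1 where "F1 = (\<lambda>u. (u, p u)) ` (S - K)"
  define F2 where "F2 = (\<lambda>u. (p u, u)) ` (S - K)"
  have F1s: "F1 \<subseteq> Pr" unfolding F1_def Pr_def nbr_def using p by auto
  have F2s: "F2 \<subseteq> Pr" unfolding F2_def Pr_def nbr_def using p sym by fastforce
  have c1: "card F1 = card (S - K)" unfolding F1_def by (rule card_image) (auto simp: inj_on_def)
  have c2: "card F2 = card (S - K)" unfolding F2_def by (rule card_image) (auto simp: inj_on_def)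
  have dis: "F1 \<inter> F2 = {}"
  proof (rule ccontr)
    assume "F1 \<inter> F2 \<noteq> {}"
    then obtain u u' where u: "u \<in> S - K" and u': "u' \<in> S - K" and eq: "(u, p u) = (p u', u')"
      unfolding F1_def F2_def by blast
    hence "u = p u'" "p u = u'" by auto
    hence "rk u < rk u'" "rk u' < rk u" using p[OF u] p[OF u'] by auto
    thus False by simp
  qed
  have "card (F1 \<union> F2) = 2 * card (S - K)"
    using card_Un_disjoint[of F1 F2] dis c1 c2 finite_subset[OF F1s fPr] finite_subset[OF F2s fPr] by simp
  moreover have "card (F1 \<union> F2) \<le> card Pr" by (rule card_mono[OF fPr]) (use F1s F2s in auto)
  moreover have "card (S - K) = card S - card K" using K fin by (simp add: card_Diff_subset finite_subset)
  ultimately have "2 * (card S - card K) \<le> card Pr" by linarith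
  thus ?thesis unfolding cPr .
qed

lemma conn_closed:
  assumes cg: "connected_graph V E" and x0: "x0 \<in> V" "x0 \<in> U"
    and cl: "\<And>x y. x \<in> U \<Longrightarrow> x \<in> V \<Longrightarrow> y \<in> V \<Longrightarrow> E x y \<Longrightarrow> y \<in> U"
  shows "V \<subseteq> U"
proof
  fix y assume y: "y \<in> V"
  have "(\<lambda>x y. x \<in> V \<and> y \<in> V \<and> E x y)\<^sup>*\<^sup>* x0 y" using cg x0 y unfolding connected_graph_def by blast
  thus "y \<in> U"
  proof (induction rule: rtranclp_induct)
    case base show ?case using x0 by simp
  next
    case (step y z) thus ?case using cl by blast
  qed
qed

fun ball :: "'a set \<Rightarrow> ('a \<Rightarrow> 'a \<Rightarrow> bool) \<Rightarrow> 'a set \<Rightarrow> nat \<Rightarrow> 'a set" where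
  "ball S E K 0 = K"
| "ball S E K (Suc j) = ball S E K j \<union> {u \<in> S. \<exists>w \<in> ball S E K j. E w u}"

lemma ball_mono: "i \<le> j \<Longrightarrow> ball S E K i \<subseteq> ball S E K j"
  by (induction j) (auto simp: le_Suc_eq)

lemma ball_sub: "K \<subseteq> S \<Longrightarrow> ball S E K j \<subseteq> S"
  by (induction j) auto

definition brk :: "'a set \<Rightarrow> ('a \<Rightarrow> 'a \<Rightarrow> bool) \<Rightarrow> 'a set \<Rightarrow> 'a \<Rightarrow> nat" where
  "brk S E K u = (LEAST j. u \<in> ball S E K j)"

lemma ball_rank_cond:
  assumes cov: "\<forall>u\<in>S. \<exists>j. u \<in> ball S E K j" and sym: "\<And>u w. E u w \<Longrightarrow> E w u" and K: "K \<subseteq> S"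
    and u: "u \<in> S - K"
  shows "\<exists>w\<in>S. E u w \<and> brk S E K w < brk S E K u"
proof -
  obtain j0 where "u \<in> ball S E K j0" using cov u by blast
  hence uj: "u \<in> ball S E K (brk S E K u)" unfolding brk_def by (rule LeastI)
  have "brk S E K u \<noteq> 0"
  proof
    assume "brk S E K u = 0"
    with uj have "u \<in> K" by simp
    with u show False by simp
  qed
  then obtain i where i: "brk S E K u = Suc i" by (cases "brk S E K u") auto
  have "u \<notin> ball S E K i"
  proof
    assume "u \<in> ball S E K i"
    hence "brk S E K u \<le> i" unfolding brk_def by (rule Least_le)
    thus False using i by simp
  qed
  then obtain w where w: "w \<in> ball S E K i" "E w u" using uj i by auto
  have "brk S E K w \<le> i" unfolding brk_def using w(1) by (rule Least_le)
  moreover have "w \<in> S" using ball_sub[OF K] w(1) by blast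
  ultimately show ?thesis using i w sym by (intro bexI[of _ w]) auto
qed

lemma branch_bound:
  assumes fin: "finite S" and sym: "\<And>u w. E u w \<Longrightarrow> E w u" and K: "K \<subseteq> S"
    and rk: "\<And>u. u \<in> S - K \<Longrightarrow> \<exists>w\<in>S. E u w \<and> rk w < (rk u :: nat)"
    and nR: "\<not> Rs S E"
  shows "card {u\<in>S. dgS S E u \<ge> 3} \<le> 2 * card K"
proof -
  let ?d = "dgS S E"
  define f where "f u = (if ?d u \<ge> 2 then 2 else if ?d u = 1 then 1 else 0 :: real)" for u
  define lf where "lf u = (if ?d u = 1 then 1 else 0 :: real)" for u
  define m2 where "m2 u = (if ?d u \<ge> 2 then 1 else 0 :: real)" for u
  define bb where "bb u = (if ?d u \<ge> 3 then 1 else 0 :: real)" for u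
  define z where "z u = (if ?d u = 0 then 1 else 0 :: real)" for u
  define SD where "SD = (\<Sum>u\<in>S. real (?d u))"
  define SL where "SL = (\<Sum>u\<in>S. lf u)"
  define SM where "SM = (\<Sum>u\<in>S. m2 u)"
  define SB where "SB = (\<Sum>u\<in>S. bb u)"
  define SZ where "SZ = (\<Sum>u\<in>S. z u)"
  have dpos: "?d u \<ge> 1" if "u \<in> S" "w \<in> S" "E u w" for u w
  proof -
    have "w \<in> nbr S E u" unfolding nbr_def using that by simp
    hence "nbr S E u \<noteq> {}" by blast
    thus ?thesis unfolding dgS_def using nbr_fin[OF fin] by (simp add: Suc_le_eq card_gt_0_iff)
  qed
  have "Qf S E f \<ge> (\<Sum>u\<in>S. \<Sum>w\<in>S. 4 * (if E u w then 1 else 0) - 2 * (if E u w then lf u else 0)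
                    - 2 * (if E u w then lf w else 0))"
    unfolding Qf_def
  proof (intro sum_mono)
    fix u w assume u: "u \<in> S" and w: "w \<in> S"
    show "4 * (if E u w then 1 else 0) - 2 * (if E u w then lf u else 0) - 2 * (if E u w then lf w else 0)
          \<le> (if E u w then f u * f w else 0)"
    proof (cases "E u w")
      case True
      have "?d u \<ge> 1" using dpos[OF u w True] .
      moreover have "?d w \<ge> 1" using dpos[OF w u sym[OF True]] .
      ultimately have fu: "f u = 2 - lf u" and fw: "f w = 2 - lf w" and "lf u \<ge> 0" "lf w \<ge> 0"
        unfolding f_def lf_def by auto
      hence "lf u * lf w \<ge> 0" by simp
      moreover have "f u * f w = 4 - 2 * lf u - 2 * lf w + lf u * lf w"
        unfolding fu fw by (simp add: algebra_simps)
      ultimately show ?thesis using True by simp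
    qed simp
  qed
  also have "(\<Sum>u\<in>S. \<Sum>w\<in>S. 4 * (if E u w then 1 else 0) - 2 * (if E u w then lf u else 0)
                    - 2 * (if E u w then lf w else 0)) =
        4 * (\<Sum>u\<in>S. \<Sum>w\<in>S. if E u w then 1 else 0) - 2 * (\<Sum>u\<in>S. \<Sum>w\<in>S. if E u w then lf u else 0)
          - 2 * (\<Sum>u\<in>S. \<Sum>w\<in>S. if E u w then lf w else 0)"
    by (simp add: sum_subtractf sum_distrib_left)
  also have "\<dots> = 4 * SD - 4 * SL"
  proof -
    have a: "(\<Sum>u\<in>S. \<Sum>w\<in>S. if E u w then 1 else 0) = SD"
      unfolding SD_def using sum_adj_fst[OF fin, of E "\<lambda>_. 1::real"] by simp
    have lfd: "lf u * real (?d u) = lf u" for u unfolding lf_def by simp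
    have b: "(\<Sum>u\<in>S. \<Sum>w\<in>S. if E u w then lf u else 0) = SL"
      unfolding SL_def sum_adj_fst[OF fin] lfd ..
    have c: "(\<Sum>u\<in>S. \<Sum>w\<in>S. if E u w then lf w else 0) = SL"
      unfolding SL_def using sum_adj_snd[where S=S and E=E and h=lf, OF fin sym] by (simp add: lfd)
    show ?thesis unfolding a b c by simp
  qed
  finally have Qlow: "Qf S E f \<ge> 4 * SD - 4 * SL" .
  have Qup: "Qf S E f \<le> 2 * sqf S f" using nR unfolding Rs_def by (meson not_less)
  have pw: "(f u)^2 = 4 * m2 u + lf u \<and> real (?d u) \<ge> 2 * m2 u + bb u + lf u \<and> 1 = m2 u + lf u + z u" for u
  proof -
    consider "?d u = 0" | "?d u = 1" | "?d u = 2" | "?d u \<ge> 3" by linarith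
    thus ?thesis by cases (simp_all add: f_def m2_def lf_def bb_def z_def)
  qed
  have sq: "sqf S f = 4 * SM + SL"
  proof -
    have "sqf S f = (\<Sum>u\<in>S. 4 * m2 u + lf u)" unfolding sqf_def using pw by (intro sum.cong refl) auto
    thus ?thesis unfolding SM_def SL_def by (simp add: sum.distrib sum_distrib_left)
  qed
  have degsum: "SD \<ge> 2 * SM + SB + SL"
  proof -
    have "(\<Sum>u\<in>S. 2 * m2 u + bb u + lf u) \<le> SD" unfolding SD_def using pw by (intro sum_mono) auto
    thus ?thesis unfolding SM_def SB_def SL_def by (simp add: sum.distrib sum_distrib_left)
  qed
  have cardS: "real (card S) = SM + SL + SZ"
  proof -
    have "real (card S) = (\<Sum>u\<in>S. 1)" by simp
    also have "\<dots> = (\<Sum>u\<in>S. m2 u + lf u + z u)" using pw by (intro sum.cong refl) auto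
    finally show ?thesis unfolding SM_def SL_def SZ_def by (simp add: sum.distrib)
  qed
  have SZ0: "SZ \<ge> 0" unfolding SZ_def z_def by (intro sum_nonneg) auto
  have ri: "2 * (card S - card K) \<le> (\<Sum>u\<in>S. ?d u)" by (rule rank_inj[OF fin sym K rk])
  have cK: "card K \<le> card S" using K fin by (rule card_mono[rotated])
  have ri': "2 * (real (card S) - real (card K)) \<le> SD"
  proof -
    have "real (2 * (card S - card K)) \<le> real (\<Sum>u\<in>S. ?d u)" using ri by (rule of_nat_mono)
    thus ?thesis unfolding SD_def using cK by (simp add: of_nat_diff)
  qed
  have cb: "real (card {u\<in>S. ?d u \<ge> 3}) = SB" unfolding SB_def bb_def by (rule card_ind[OF fin])
  have A: "4 * SD \<le> 8 * SM + 6 * SL" using Qlow Qup sq by linarith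
  have B: "4 * SB \<le> 2 * SL" using A degsum by linarith
  have C: "SL \<le> 4 * real (card K)" using A cardS SZ0 ri' by (smt (verit))
  have "SB \<le> 2 * real (card K)" using B C by linarith
  hence "real (card {u\<in>S. ?d u \<ge> 3}) \<le> real (2 * card K)" unfolding cb by simp
  thus ?thesis by (simp only: of_nat_le_iff)
qed

lemma decomp:
  fixes V :: "'a::linorder set"
  assumes sg: "simple_graph V E" and cg: "connected_graph V E" and se: "second_eig V E \<le> 2"
    and MV: "M \<subseteq> V" and RM: "Rs M E"
  defines "A \<equiv> {u \<in> V - M. \<exists>m\<in>M. E u m}"
  defines "H \<equiv> V - M - A"
  defines "HA \<equiv> {h \<in> H. \<exists>a\<in>A. E h a}"
  shows "card {v\<in>V. degree V E v > 2} \<le> card ({v\<in>V. degree V E v > 2} \<inter> M) + card A + 3 * card HA"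
proof -
  have fin: "finite V" and sym: "\<And>u w. E u w \<Longrightarrow> E w u" and irr: "\<And>v. \<not> E v v"
    using sg unfolding simple_graph_def by auto
  have HV: "H \<subseteq> V" unfolding H_def by auto
  have Hfin: "finite H" using HV fin by (rule finite_subset)
  have HAH: "HA \<subseteq> H" unfolding HA_def by auto
  have nadj: "\<not> E u w" if "u \<in> M" "w \<in> H" for u w
  proof
    assume "E u w"
    hence "E w u" by (rule sym)
    hence "w \<in> A" unfolding A_def using that H_def by auto
    thus False using that H_def by auto
  qed
  have nRH: "\<not> Rs H E"
  proof
    assume "Rs H E"
    hence "second_eig V E > 2"
      using disjoint_pair[of V E M H, OF fin sym MV HV _ nadj RM] unfolding H_def by blast
    thus False using se by simp
  qed
  have "M \<noteq> {}" using RM Rs_empty by metis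
  then obtain m0 where m0: "m0 \<in> M" by blast
  define U where "U = M \<union> A \<union> {u. \<exists>j. u \<in> ball H E HA j}"
  have "V \<subseteq> U"
  proof (rule conn_closed[OF cg])
    show "m0 \<in> V" "m0 \<in> U" using m0 MV unfolding U_def by auto
  next
    fix x y assume x: "x \<in> U" "x \<in> V" and y: "y \<in> V" and xy: "E x y"
    show "y \<in> U"
    proof (cases "y \<in> M \<or> y \<in> A")
      case True thus ?thesis unfolding U_def by auto
    next
      case False
      hence yH: "y \<in> H" unfolding H_def using y by auto
      consider "x \<in> M" | "x \<in> A" | j where "x \<in> ball H E HA j" using x unfolding U_def by auto
      thus ?thesis
      proof cases
        case 1 thus ?thesis using nadj[OF 1 yH] xy by simp
      next
        case 2
        hence "y \<in> HA" unfolding HA_def using yH sym[OF xy] by auto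
        hence "y \<in> ball H E HA 0" by simp
        thus ?thesis unfolding U_def by blast
      next
        case 3
        hence "y \<in> ball H E HA (Suc j)" using yH xy by auto
        thus ?thesis unfolding U_def by blast
      qed
    qed
  qed
  hence cov: "\<forall>h\<in>H. \<exists>j. h \<in> ball H E HA j" unfolding U_def H_def by auto
  have rc: "\<And>u. u \<in> H - HA \<Longrightarrow> \<exists>w\<in>H. E u w \<and> brk H E HA w < brk H E HA u"
    using ball_rank_cond[where S=H and E=E and K=HA, OF cov sym HAH] by blast
  have bb: "card {h\<in>H. dgS H E h \<ge> 3} \<le> 2 * card HA"
    by (rule branch_bound[where S=H and E=E and K=HA and rk="brk H E HA", OF Hfin sym HAH rc nRH])
  define D where "D = {v\<in>V. degree V E v > 2}"
  have sub: "D \<subseteq> (D \<inter> M) \<union> A \<union> HA \<union> {h\<in>H. dgS H E h \<ge> 3}"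
  proof
    fix v assume vD: "v \<in> D"
    show "v \<in> (D \<inter> M) \<union> A \<union> HA \<union> {h\<in>H. dgS H E h \<ge> 3}"
    proof (cases "v \<in> H - HA")
      case False thus ?thesis using vD unfolding D_def H_def by auto
    next
      case True
      have "nbr V E v = nbr H E v"
      proof
        show "nbr V E v \<subseteq> nbr H E v"
        proof
          fix w assume "w \<in> nbr V E v"
          hence w: "w \<in> V" "E v w" unfolding nbr_def by auto
          have "w \<notin> M"
          proof
            assume "w \<in> M"
            hence "v \<in> A" unfolding A_def using True w H_def by auto
            thus False using True H_def by auto
          qed
          moreover have "w \<notin> A"
          proof
            assume "w \<in> A"
            hence "v \<in> HA" unfolding HA_def using True w by auto
            thus False using True by auto
          qed
          ultimately show "w \<in> nbr H E v" unfolding nbr_def H_def using w by auto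
        qed
      qed (use HV in \<open>auto simp: nbr_def\<close>)
      hence "dgS H E v = degree V E v" unfolding dgS_def degree_dgS by simp
      thus ?thesis using vD True unfolding D_def by auto
    qed
  qed
  have fins: "finite (D \<inter> M)" "finite A" "finite HA" "finite {h\<in>H. dgS H E h \<ge> 3}"
    using fin Hfin unfolding A_def HA_def D_def by auto
  have "card D \<le> card ((D \<inter> M) \<union> A \<union> HA \<union> {h\<in>H. dgS H E h \<ge> 3})"
    by (rule card_mono) (use fins sub in auto)
  also have "\<dots> \<le> card (D \<inter> M) + card A + card HA + card {h\<in>H. dgS H E h \<ge> 3}"
    by (meson card_Un_le add_le_mono order_trans le_refl)
  finally show ?thesis using bb unfolding D_def by linarith
qed

lemma deg_le_gi:
  fixes V :: "'a::linorder set"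
  assumes sg: "simple_graph V E" and v: "v \<in> V"
  shows "real (degree V E v) \<le> (graph_index V E)^2"
proof -
  have fin: "finite V" and sym: "\<And>u w. E u w \<Longrightarrow> E w u" and irr: "\<And>v. \<not> E v v"
    using sg unfolding simple_graph_def by auto
  define d where "d = degree V E v"
  define N where "N = nbr V E v"
  have Nfin: "finite N" unfolding N_def using nbr_fin[OF fin] .
  have cN: "card N = d" unfolding N_def d_def degree_dgS dgS_def ..
  have vN: "v \<notin> N" unfolding N_def nbr_def using irr by auto
  have NV: "N \<subseteq> V" unfolding N_def nbr_def by auto
  show ?thesis
  proof (cases "d = 0")
    case True thus ?thesis unfolding d_def by simp
  next
    case False
    define sd where "sd = sqrt (real d)"
    have sd0: "sd \<ge> 0" unfolding sd_def by simp
    define f where "f u = (if u = v then sd else if u \<in> N then 1 else 0)" for u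
    have f0: "f u \<ge> 0" for u unfolding f_def using sd0 by auto
    have Ne: "V \<noteq> {}" using v by auto
    have low: "f u * (\<Sum>w\<in>nbr V E u. f w) \<ge> (if u = v then sd * d else 0) + (if u \<in> N then sd else 0)"
      if u: "u \<in> V" for u
    proof (cases "u = v")
      case True
      have "(\<Sum>w\<in>nbr V E u. f w) = (\<Sum>w\<in>N. 1)"
        unfolding True N_def[symmetric] by (intro sum.cong refl) (use vN in \<open>auto simp: f_def\<close>)
      thus ?thesis using True vN cN by (simp add: f_def)
    next
      case False
      show ?thesis
      proof (cases "u \<in> N")
        case True
        hence "v \<in> nbr V E u" unfolding N_def nbr_def using sym v by auto
        hence "f v \<le> (\<Sum>w\<in>nbr V E u. f w)"
          by (intro member_le_sum) (use f0 nbr_fin[OF fin] in auto)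
        thus ?thesis using True False by (simp add: f_def)
      next
        case False'': False
        thus ?thesis using False f0 by (simp add: f_def)
      qed
    qed
    have "Qf V E f = (\<Sum>u\<in>V. f u * (\<Sum>w\<in>nbr V E u. f w))" by (rule Qf_vertex[OF fin])
    also have "\<dots> \<ge> (\<Sum>u\<in>V. (if u = v then sd * d else 0) + (if u \<in> N then sd else 0))"
      by (intro sum_mono low)
    finally have "Qf V E f \<ge> sd * d + sd * d"
      using v NV fin Nfin cN by (simp add: sum.distrib sum.If_cases Int_absorb1 Int_absorb2 Int_commute)
    moreover have "sqf V f = d + d"
    proof -
      have "sqf V f = (\<Sum>u\<in>V. (if u = v then real d else 0) + (if u \<in> N then 1 else 0))"
        unfolding sqf_def by (intro sum.cong refl) (use vN in \<open>auto simp: f_def sd_def\<close>)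
      thus ?thesis using v NV fin Nfin cN by (simp add: sum.distrib sum.If_cases Int_absorb1 Int_absorb2 Int_commute)
    qed
    moreover have "Qf V E f \<le> graph_index V E * sqf V f" using gi_facts(1)[of V E, OF fin sym Ne] by blast
    ultimately have "2 * d * sd \<le> 2 * d * graph_index V E" by (simp add: algebra_simps)
    hence le: "sd \<le> graph_index V E" using False by simp
    have "real d = sd^2" unfolding sd_def by simp
    also have "\<dots> \<le> (graph_index V E)^2" by (rule power_mono[OF le sd0])
    finally show ?thesis unfolding d_def .
  qed
qed

lemma star_M:
  fixes V :: "'a::linorder set"
  assumes sg: "simple_graph V E" and cg: "connected_graph V E" and RV: "Rs V E"
    and v: "v \<in> V" and d4: "degree V E v \<ge> 4"
  shows "\<exists>M. M \<subseteq> V \<and> Rs M E \<and> card M \<le> 6"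
proof -
  have fin: "finite V" and sym: "\<And>u w. E u w \<Longrightarrow> E w u" and irr: "\<And>v. \<not> E v v"
    using sg unfolding simple_graph_def by auto
  have "4 \<le> card (nbr V E v)" using d4 unfolding degree_dgS dgS_def .
  then obtain N4 where N4: "N4 \<subseteq> nbr V E v" and cN4: "card N4 = 4"
    using obtain_subset_with_card_n by metis
  have N4fin: "finite N4" using cN4 by (metis card.infinite zero_neq_numeral)
  have vN4: "v \<notin> N4" using N4 irr unfolding nbr_def by auto
  have N4V: "N4 \<subseteq> V" using N4 unfolding nbr_def by auto
  have adj: "E v x" if "x \<in> N4" for x using N4 that unfolding nbr_def by auto
  define S where "S = insert v N4"
  have SV: "S \<subseteq> V" unfolding S_def using v N4V by auto
  have cS: "card S = 5" unfolding S_def using vN4 N4fin cN4 by simp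
  show ?thesis
  proof (cases "\<exists>w\<in>V - S. \<exists>s\<in>S. E s w")
    case True
    then obtain w s where w: "w \<in> V" "w \<notin> S" and s: "s \<in> S" "E s w" by blast
    define M where "M = insert w S"
    have MV: "M \<subseteq> V" unfolding M_def using w SV by auto
    have Mfin: "finite M" using MV fin by (rule finite_subset)
    have cM: "card M = 6" unfolding M_def using w cS N4fin S_def by simp
    define f where "f u = (if u = v then 2 else if u \<in> N4 then 1 else if u = w then 1/4 else 0 :: real)" for u
    have f0: "f u \<ge> 0" for u unfolding f_def by auto
    have wv: "w \<noteq> v" "w \<notin> N4" using w unfolding S_def by auto
    have fs: "f s \<ge> 1" using s wv unfolding f_def S_def by auto
    define g where "g u = (if u = v then 8 else if u \<in> N4 then 2 else if u = w then f s / 4 else 0 :: real)" for u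
    have low: "f u * (\<Sum>y\<in>nbr M E u. f y) \<ge> g u" if u: "u \<in> M" for u
    proof -
      have nf: "finite (nbr M E u)" by (rule nbr_fin[OF Mfin])
      consider "u = v" | "u \<in> N4" | "u = w" using u unfolding M_def S_def by auto
      thus ?thesis
      proof cases
        case 1
        have "N4 \<subseteq> nbr M E u" using adj unfolding 1 nbr_def M_def S_def by auto
        hence "(\<Sum>y\<in>N4. f y) \<le> (\<Sum>y\<in>nbr M E u. f y)" by (intro sum_mono2[OF nf]) (auto simp: f0)
        moreover have "(\<Sum>y\<in>N4. f y) = 4"
        proof -
          have "(\<Sum>y\<in>N4. f y) = (\<Sum>y\<in>N4. 1)" by (intro sum.cong refl) (use vN4 in \<open>auto simp: f_def\<close>)
          thus ?thesis using cN4 by simp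
        qed
        ultimately show ?thesis using 1 by (simp add: f_def g_def)
      next
        case 2
        have "v \<in> nbr M E u" using adj[OF 2] sym unfolding nbr_def M_def S_def by auto
        hence "f v \<le> (\<Sum>y\<in>nbr M E u. f y)" by (intro member_le_sum[OF _ _ nf]) (auto simp: f0)
        thus ?thesis using 2 vN4 by (auto simp: f_def g_def)
      next
        case 3
        have "s \<in> nbr M E u" using s sym unfolding 3 nbr_def M_def by auto
        hence "f s \<le> (\<Sum>y\<in>nbr M E u. f y)" by (intro member_le_sum[OF _ _ nf]) (auto simp: f0)
        thus ?thesis using 3 wv by (auto simp: f_def g_def)
      qed
    qed
    have sg_: "(\<Sum>u\<in>M. g u) = 16 + f s / 4"
    proof -
      have "(\<Sum>u\<in>N4. g u) = (\<Sum>u\<in>N4. 2)" by (intro sum.cong refl) (use vN4 in \<open>auto simp: g_def\<close>)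
      hence "(\<Sum>u\<in>N4. g u) = 8" using cN4 by simp
      thus ?thesis unfolding M_def S_def using w N4fin vN4 wv by (simp add: g_def S_def)
    qed
    have sq: "sqf M f = 8 + 1/16"
    proof -
      have "(\<Sum>u\<in>N4. (f u)^2) = (\<Sum>u\<in>N4. 1)" by (intro sum.cong refl) (use vN4 in \<open>auto simp: f_def\<close>)
      hence "(\<Sum>u\<in>N4. (f u)^2) = 4" using cN4 by simp
      thus ?thesis unfolding sqf_def M_def S_def using w N4fin vN4 wv by (simp add: f_def S_def power2_eq_square)
    qed
    have "Qf M E f = (\<Sum>u\<in>M. f u * (\<Sum>y\<in>nbr M E u. f y))" by (rule Qf_vertex[OF Mfin])
    also have "\<dots> \<ge> (\<Sum>u\<in>M. g u)" by (intro sum_mono low)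
    finally have "Qf M E f \<ge> 16 + f s / 4" unfolding sg_ .
    moreover have "2 * sqf M f = 16 + 1/8" unfolding sq by simp
    ultimately have "Qf M E f > 2 * sqf M f" using fs by linarith
    hence "Rs M E" unfolding Rs_def by blast
    thus ?thesis using MV cM by auto
  next
    case False
    have "V \<subseteq> S"
    proof (rule conn_closed[OF cg])
      show "v \<in> V" "v \<in> S" using v unfolding S_def by auto
    next
      fix x y assume "x \<in> S" "x \<in> V" "y \<in> V" "E x y"
      thus "y \<in> S" using False by blast
    qed
    hence "V = S" using SV by auto
    thus ?thesis using RV cS by auto
  qed
qed

lemma sum_ind_nat: "finite L \<Longrightarrow> (\<Sum>w\<in>L. if w \<in> D then 1 else 0) = card (D \<inter> L)"
proof -
  assume fL: "finite L"
  have "(\<Sum>w\<in>L. (if w \<in> D then 1 else 0::nat)) = (\<Sum>w\<in>{w\<in>L. w \<in> D}. 1)"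
    using sum.inter_filter[OF fL, of "\<lambda>_. 1::nat" "\<lambda>w. w \<in> D"] by simp
  also have "{w\<in>L. w \<in> D} = D \<inter> L" by auto
  finally show ?thesis by simp
qed

lemma sum_21: "finite L \<Longrightarrow> (\<Sum>w\<in>L. (if w \<in> D then 2 else 1::nat)) = card L + card (D \<inter> L)"
proof -
  assume fL: "finite L"
  have "(\<Sum>w\<in>L. (if w \<in> D then 2 else 1::nat)) = (\<Sum>w\<in>L. 1 + (if w \<in> D then 1 else 0))"
    by (intro sum.cong refl) auto
  also have "\<dots> = (\<Sum>w\<in>L. 1) + (\<Sum>w\<in>L. if w \<in> D then 1 else 0)" by (rule sum.distrib)
  finally show ?thesis using sum_ind_nat[OF fL] by simp
qed

lemma layer_step:
  fixes V :: "'a::linorder set"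
  assumes fin: "finite V" and sym: "\<And>u w. E u w \<Longrightarrow> E w u" and v: "v \<in> V"
    and deg3: "\<And>u. u \<in> V \<Longrightarrow> degree V E u \<le> 3"
    and i: "i \<ge> 1"
  defines "B \<equiv> ball V E {v}"
  shows "card (B (Suc i) - B i) \<le> card (B i - B (i-1)) + card ({u\<in>V. degree V E u > 2} \<inter> (B i - B (i-1)))"
proof -
  define D where "D = {u\<in>V. degree V E u > 2}"
  define L where "L = B i - B (i-1)"
  have BV: "B k \<subseteq> V" for k unfolding B_def by (rule ball_sub) (use v in auto)
  have Lfin: "finite L" unfolding L_def using BV fin by (meson finite_Diff finite_subset)
  have iS: "i = Suc (i-1)" using i by simp
  have sub: "B (Suc i) - B i \<subseteq> (\<Union>w\<in>L. nbr V E w - B i)"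
  proof
    fix u assume u: "u \<in> B (Suc i) - B i"
    then obtain w where w: "w \<in> B i" "E w u" "u \<in> V" unfolding B_def by auto
    have "w \<notin> B (i-1)"
    proof
      assume "w \<in> B (i-1)"
      hence "u \<in> B (Suc (i-1))" using w unfolding B_def by auto
      thus False using u iS by simp
    qed
    hence "w \<in> L" unfolding L_def using w by auto
    moreover have "u \<in> nbr V E w - B i" using w u unfolding nbr_def by auto
    ultimately show "u \<in> (\<Union>w\<in>L. nbr V E w - B i)" by blast
  qed
  have each: "card (nbr V E w - B i) \<le> (if w \<in> D then 2 else 1)" if wL: "w \<in> L" for w
  proof -
    have "w \<in> B (Suc (i-1))" "w \<notin> B (i-1)" using wL iS unfolding L_def by auto
    then obtain y where y: "y \<in> B (i-1)" "E y w" unfolding B_def by auto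
    have yB: "y \<in> B i" using y ball_mono[of "i-1" i V E "{v}"] unfolding B_def by auto
    have yN: "y \<in> nbr V E w" using y BV sym unfolding nbr_def by auto
    have wV: "w \<in> V" using wL BV unfolding L_def by auto
    have "nbr V E w - B i \<subseteq> nbr V E w - {y}" using yB by auto
    hence "card (nbr V E w - B i) \<le> card (nbr V E w - {y})"
      by (intro card_mono) (use nbr_fin[OF fin] in auto)
    also have "\<dots> = degree V E w - 1" using yN nbr_fin[OF fin] unfolding degree_dgS dgS_def by simp
    finally show ?thesis using deg3[OF wV] wV unfolding D_def by auto
  qed
  have "card (B (Suc i) - B i) \<le> card (\<Union>w\<in>L. nbr V E w - B i)"
    by (rule card_mono[OF _ sub]) (use Lfin nbr_fin[OF fin] in auto)
  also have "\<dots> \<le> (\<Sum>w\<in>L. card (nbr V E w - B i))" by (rule card_UN_le[OF Lfin])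
  also have "\<dots> \<le> (\<Sum>w\<in>L. (if w \<in> D then 2 else 1))" by (intro sum_mono each)
  also have "\<dots> = card L + card (D \<inter> L)" by (rule sum_21[OF Lfin])
  finally show ?thesis unfolding L_def D_def .
qed

lemma cubic_bound:
  fixes V :: "'a::linorder set"
  assumes sg: "simple_graph V E" and cg: "connected_graph V E" and se: "second_eig V E \<le> 2"
    and RV: "Rs V E" and v: "v \<in> V" and deg3: "\<And>u. u \<in> V \<Longrightarrow> degree V E u \<le> 3"
  shows "card {u\<in>V. degree V E u > 2} \<le> 157"
proof -
  have fin: "finite V" and sym: "\<And>u w. E u w \<Longrightarrow> E w u" and irr: "\<And>v. \<not> E v v"
    using sg unfolding simple_graph_def by auto
  define D where "D = {u\<in>V. degree V E u > 2}"
  define B where "B = ball V E {v}"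
  have BV: "B k \<subseteq> V" for k unfolding B_def by (rule ball_sub) (use v in auto)
  have Bmono: "i \<le> k \<Longrightarrow> B i \<subseteq> B k" for i k unfolding B_def by (rule ball_mono)
  have B0: "B 0 = {v}" unfolding B_def by simp
  have BS: "B (Suc k) = B k \<union> {u\<in>V. \<exists>w\<in>B k. E w u}" for k unfolding B_def by simp
  have Bfin: "finite (B k)" for k using BV fin by (rule finite_subset)
  have covV: "V \<subseteq> {u. \<exists>k. u \<in> B k}"
  proof (rule conn_closed[OF cg v])
    show "v \<in> {u. \<exists>k. u \<in> B k}" using B0 by auto
  next
    fix x y assume "x \<in> {u. \<exists>k. u \<in> B k}" "x \<in> V" "y \<in> V" "E x y"
    then obtain k where "x \<in> B k" by auto
    hence "y \<in> B (Suc k)" using BS \<open>y \<in> V\<close> \<open>E x y\<close> by auto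
    thus "y \<in> {u. \<exists>k. u \<in> B k}" by blast
  qed
  have "\<exists>J. Rs (B J) E"
  proof -
    define J where "J = Max ((\<lambda>u. LEAST k. u \<in> B k) ` V)"
    have "V \<subseteq> B J"
    proof
      fix u assume u: "u \<in> V"
      hence ex: "\<exists>k. u \<in> B k" using covV by auto
      have "u \<in> B (LEAST k. u \<in> B k)" by (rule LeastI_ex[OF ex])
      moreover have "(LEAST k. u \<in> B k) \<le> J" unfolding J_def using fin u by (intro Max_ge) auto
      ultimately show "u \<in> B J" using Bmono by blast
    qed
    hence "B J = V" using BV by auto
    thus ?thesis using RV by auto
  qed
  define r where "r = (LEAST k. Rs (B k) E)"
  have Rr: "Rs (B r) E" unfolding r_def by (rule LeastI_ex) fact
  have "r \<noteq> 0"
  proof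
    assume "r = 0"
    hence "Rs {v} E" using Rr B0 by simp
    thus False using Rs_single[of E v] irr by blast
  qed
  then obtain j where rj: "r = Suc j" by (cases r) auto
  have nRj: "\<not> Rs (B j) E" using not_less_Least[of j "\<lambda>k. Rs (B k) E"] rj unfolding r_def by auto
  define M where "M = B (Suc j)"
  have MV: "M \<subseteq> V" unfolding M_def by (rule BV)
  have RM: "Rs M E" using Rr rj unfolding M_def by simp
  define A where "A = {u \<in> V - M. \<exists>m\<in>M. E u m}"
  define HA where "HA = {h \<in> V - M - A. \<exists>a\<in>A. E h a}"
  have dc: "card D \<le> card (D \<inter> M) + card A + 3 * card HA"
    using decomp[OF sg cg se MV RM] unfolding D_def A_def HA_def by simp
  define L where "L k = card (B k - B (k-1))" for k
  have LS: "L (Suc i) \<le> L i + card (D \<inter> (B i - B (i-1)))" if "i \<ge> 1" for i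
    using layer_step[OF fin sym v deg3 that] unfolding L_def D_def B_def by simp
  have L2: "L (Suc i) \<le> 2 * L i" if "i \<ge> 1" for i
  proof -
    have "card (D \<inter> (B i - B (i-1))) \<le> L i" unfolding L_def
      by (rule card_mono) (use Bfin in auto)
    thus ?thesis using LS[OF that] by simp
  qed
  have L1: "L 1 \<le> 3"
  proof -
    have "B 1 - B 0 \<subseteq> nbr V E v" using BS[of 0] B0 unfolding nbr_def by auto
    hence "L 1 \<le> card (nbr V E v)" unfolding L_def by (intro card_mono nbr_fin[OF fin]) auto
    thus ?thesis using deg3[OF v] unfolding degree_dgS dgS_def by simp
  qed
  have AL: "card A \<le> L (Suc (Suc j))"
  proof -
    have "A \<subseteq> B (Suc (Suc j)) - B (Suc (Suc j) - 1)"
    proof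
      fix u assume "u \<in> A"
      then obtain m where "u \<in> V" "u \<notin> M" "m \<in> M" "E u m" unfolding A_def by auto
      thus "u \<in> B (Suc (Suc j)) - B (Suc (Suc j) - 1)" using BS[of "Suc j"] sym unfolding M_def by auto
    qed
    thus ?thesis unfolding L_def by (intro card_mono) (use Bfin in auto)
  qed
  have HAL: "card HA \<le> L (Suc (Suc (Suc j)))"
  proof -
    have "HA \<subseteq> B (Suc (Suc (Suc j))) - B (Suc (Suc (Suc j)) - 1)"
    proof
      fix h assume "h \<in> HA"
      then obtain a where h: "h \<in> V" "h \<notin> M" "h \<notin> A" "a \<in> A" "E h a" unfolding HA_def by auto
      have aB: "a \<in> B (Suc (Suc j))"
        using h(4) BS[of "Suc j"] sym unfolding A_def M_def by auto
      have "h \<in> B (Suc (Suc (Suc j)))" using BS[of "Suc (Suc j)"] aB h sym by auto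
      moreover have "h \<notin> B (Suc (Suc j))"
      proof
        assume "h \<in> B (Suc (Suc j))"
        then obtain w where "w \<in> M" "E w h" using h(2) BS[of "Suc j"] unfolding M_def by auto
        hence "h \<in> A" unfolding A_def using h sym by auto
        thus False using h by simp
      qed
      ultimately show "h \<in> B (Suc (Suc (Suc j))) - B (Suc (Suc (Suc j)) - 1)" by simp
    qed
    thus ?thesis unfolding L_def by (intro card_mono) (use Bfin in auto)
  qed
  show ?thesis
  proof (cases "j = 0")
    case True
    have "B 1 \<subseteq> insert v (nbr V E v)" using BS[of 0] B0 unfolding nbr_def by auto
    hence "card (B 1) \<le> card (insert v (nbr V E v))" by (intro card_mono) (use nbr_fin[OF fin] in auto)
    also have "\<dots> \<le> Suc (card (nbr V E v))" using card_insert_if[of "nbr V E v" v] nbr_fin[OF fin] by auto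
    finally have "card (B 1) \<le> 4" using deg3[OF v] unfolding degree_dgS dgS_def by simp
    hence "card (D \<inter> M) \<le> 4" unfolding M_def True using card_mono[OF Bfin, of "D \<inter> B 1" 1] by auto
    moreover have "L 2 \<le> 6" using L2[of 1] L1 by (simp add: numeral_2_eq_2)
    moreover have "L 3 \<le> 12" using L2[of 2] \<open>L 2 \<le> 6\<close> by (simp add: numeral_3_eq_3 numeral_2_eq_2)
    ultimately show ?thesis using dc AL HAL True unfolding D_def
      by (simp add: numeral_3_eq_3 numeral_2_eq_2)
  next
    case False
    hence j1: "j \<ge> 1" by simp
    define S where "S = B j"
    have SV: "S \<subseteq> V" unfolding S_def by (rule BV)
    have Sfin: "finite S" using SV fin by (rule finite_subset)
    have vS: "{v} \<subseteq> S" unfolding S_def using Bmono[of 0 j] B0 by auto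
    have sub_ball: "i \<le> j \<Longrightarrow> B i \<subseteq> ball S E {v} i" for i
    proof (induction i)
      case 0 thus ?case using B0 by simp
    next
      case (Suc i)
      have IH: "B i \<subseteq> ball S E {v} i" using Suc by simp
      show ?case
      proof
        fix u assume "u \<in> B (Suc i)"
        hence "u \<in> B i \<or> (u \<in> V \<and> (\<exists>w\<in>B i. E w u))" using BS by auto
        moreover have "u \<in> S" using \<open>u \<in> B (Suc i)\<close> Bmono[OF Suc.prems] unfolding S_def by auto
        ultimately show "u \<in> ball S E {v} (Suc i)" using IH by auto
      qed
    qed
    have covS: "\<forall>u\<in>S. \<exists>k. u \<in> ball S E {v} k" using sub_ball[of j] unfolding S_def by auto
    have rcS: "\<And>u. u \<in> S - {v} \<Longrightarrow> \<exists>w\<in>S. E u w \<and> brk S E {v} w < brk S E {v} u"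
      using ball_rank_cond[where S=S and E=E and K="{v}", OF covS sym vS] by blast
    have nRS: "\<not> Rs S E" unfolding S_def by (rule nRj)
    have bbS: "card {u\<in>S. dgS S E u \<ge> 3} \<le> 2 * card {v}"
      by (rule branch_bound[where rk="brk S E {v}"], rule Sfin, erule sym, rule vS, erule rcS, rule nRS)
    have int: "card (D \<inter> B (j-1)) \<le> 2"
    proof -
      have "D \<inter> B (j-1) \<subseteq> {u\<in>S. dgS S E u \<ge> 3}"
      proof
        fix u assume u: "u \<in> D \<inter> B (j-1)"
        have "nbr S E u = nbr V E u"
        proof
          show "nbr S E u \<subseteq> nbr V E u" using SV unfolding nbr_def by auto
          show "nbr V E u \<subseteq> nbr S E u"
          proof
            fix w assume "w \<in> nbr V E u"
            hence "w \<in> B (Suc (j-1))" using u BS[of "j-1"] unfolding nbr_def by auto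
            thus "w \<in> nbr S E u" using \<open>w \<in> nbr V E u\<close> j1 unfolding nbr_def S_def by auto
          qed
        qed
        moreover have "u \<in> S" using u Bmono[of "j-1" j] unfolding S_def by auto
        ultimately show "u \<in> {u\<in>S. dgS S E u \<ge> 3}" using u unfolding D_def degree_dgS dgS_def by auto
      qed
      hence "card (D \<inter> B (j-1)) \<le> card {u\<in>S. dgS S E u \<ge> 3}" by (intro card_mono) (use Sfin in auto)
      thus ?thesis using bbS by simp
    qed
    have tele: "1 \<le> i \<longrightarrow> i \<le> j \<longrightarrow> L i \<le> 3 + card (D \<inter> B (i-1))" for i
    proof (induction i)
      case 0 show ?case by simp
    next
      case (Suc i)
      show ?case
      proof (cases "i = 0")
        case True thus ?thesis using L1 by simp
      next
        case False
        hence i1: "i \<ge> 1" by simp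
        show ?thesis
        proof (intro impI)
          assume "Suc i \<le> j"
          hence IH: "L i \<le> 3 + card (D \<inter> B (i-1))" using Suc.IH i1 by simp
          have dis: "(D \<inter> B (i-1)) \<inter> (D \<inter> (B i - B (i-1))) = {}" by auto
          have un: "D \<inter> B i = (D \<inter> B (i-1)) \<union> (D \<inter> (B i - B (i-1)))" using Bmono[of "i-1" i] by auto
          have "card (D \<inter> B i) = card (D \<inter> B (i-1)) + card (D \<inter> (B i - B (i-1)))"
            unfolding un by (rule card_Un_disjoint) (use Bfin dis in auto)
          thus "L (Suc i) \<le> 3 + card (D \<inter> B (Suc i - 1))" using LS[OF i1] IH by simp
        qed
      qed
    qed
    have Lj: "L j \<le> 5" using tele[of j] j1 int by simp
    have Lj1: "L (Suc j) \<le> 10" using L2[OF j1] Lj by simp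
    have Lj2: "L (Suc (Suc j)) \<le> 20" using L2[of "Suc j"] Lj1 by simp
    have Lj3: "L (Suc (Suc (Suc j))) \<le> 40" using L2[of "Suc (Suc j)"] Lj2 by simp
    have "D \<inter> M \<subseteq> (D \<inter> B (j-1)) \<union> (B j - B (j-1)) \<union> (B (Suc j) - B j)" unfolding M_def by auto
    hence "card (D \<inter> M) \<le> card ((D \<inter> B (j-1)) \<union> (B j - B (j-1)) \<union> (B (Suc j) - B j))"
      by (intro card_mono) (use Bfin in auto)
    also have "\<dots> \<le> card (D \<inter> B (j-1)) + L j + L (Suc j)" unfolding L_def
      by (metis (no_types, lifting) card_Un_le add_le_mono order_trans le_refl diff_Suc_1)
    finally have "card (D \<inter> M) \<le> 17" using int Lj Lj1 by simp
    thus ?thesis using dc AL HAL Lj2 Lj3 unfolding D_def by simp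
  qed
qed

lemma leaf_bound:
  fixes V :: "'a::linorder set"
  assumes sg: "simple_graph V E" and cg: "connected_graph V E"
  shows "real (card {u\<in>V. degree V E u = 1}) \<le> 2 + (\<Sum>u\<in>{u\<in>V. degree V E u > 2}. (real (degree V E u) - 2))"
proof -
  have fin: "finite V" and sym: "\<And>u w. E u w \<Longrightarrow> E w u" and irr: "\<And>v. \<not> E v v"
    using sg unfolding simple_graph_def by auto
  obtain v0 where v0: "v0 \<in> V" using cg unfolding connected_graph_def by auto
  define B where "B = ball V E {v0}"
  have BS: "B (Suc k) = B k \<union> {u\<in>V. \<exists>w\<in>B k. E w u}" for k unfolding B_def by simp
  have covV: "V \<subseteq> {u. \<exists>k. u \<in> B k}"
  proof (rule conn_closed[OF cg v0])
    show "v0 \<in> {u. \<exists>k. u \<in> B k}" unfolding B_def by (auto intro: exI[of _ 0])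
  next
    fix x y assume "x \<in> {u. \<exists>k. u \<in> B k}" "x \<in> V" "y \<in> V" "E x y"
    then obtain k where "x \<in> B k" by auto
    hence "y \<in> B (Suc k)" using BS \<open>y \<in> V\<close> \<open>E x y\<close> by auto
    thus "y \<in> {u. \<exists>k. u \<in> B k}" by blast
  qed
  have cov: "\<forall>u\<in>V. \<exists>k. u \<in> ball V E {v0} k" using covV unfolding B_def by auto
  have K: "{v0} \<subseteq> V" using v0 by simp
  have rc: "\<And>u. u \<in> V - {v0} \<Longrightarrow> \<exists>w\<in>V. E u w \<and> brk V E {v0} w < brk V E {v0} u"
    using ball_rank_cond[where S=V and E=E and K="{v0}", OF cov sym K] by blast
  have ri: "2 * (card V - card {v0}) \<le> (\<Sum>u\<in>V. dgS V E u)"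
    by (rule rank_inj[where rk="brk V E {v0}"], rule fin, erule sym, rule K, erule rc)
  have cV: "card V \<ge> 1" using v0 fin by (simp add: Suc_le_eq card_gt_0_iff) blast
  have "real (2 * (card V - 1)) \<le> real (\<Sum>u\<in>V. dgS V E u)" using ri by (simp only: of_nat_le_iff card.empty card_insert_if) simp
  hence low: "2 * real (card V) - 2 \<le> (\<Sum>u\<in>V. real (degree V E u))"
    using cV by (simp add: of_nat_diff degree_dgS)
  define d where "d u = real (degree V E u)" for u
  have pw: "d u - 2 \<le> (if degree V E u > 2 then d u - 2 else 0) - (if degree V E u = 1 then 1 else 0)" for u
  proof -
    consider "degree V E u = 0" | "degree V E u = 1" | "degree V E u = 2" | "degree V E u > 2" by linarith
    thus ?thesis by cases (simp_all add: d_def)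
  qed
  have "(\<Sum>u\<in>V. d u - 2) \<le> (\<Sum>u\<in>V. (if degree V E u > 2 then d u - 2 else 0) - (if degree V E u = 1 then 1 else 0))"
    by (intro sum_mono pw)
  also have "\<dots> = (\<Sum>u\<in>{u\<in>V. degree V E u > 2}. d u - 2) - real (card {u\<in>V. degree V E u = 1})"
  proof -
    have e2: "(\<Sum>u\<in>V. if degree V E u > 2 then d u - 2 else 0) = (\<Sum>u\<in>{u\<in>V. degree V E u > 2}. d u - 2)"
      by (rule sum.inter_filter[OF fin, symmetric])
    have e3: "(\<Sum>u\<in>V. if degree V E u = 1 then 1 else 0) = real (card {u\<in>V. degree V E u = 1})"
      by (rule card_ind[OF fin, symmetric])
    show ?thesis unfolding sum_subtractf e2 e3 ..
  qed
  finally have "(\<Sum>u\<in>V. d u - 2) \<le> (\<Sum>u\<in>{u\<in>V. degree V E u > 2}. d u - 2) - real (card {u\<in>V. degree V E u = 1})" .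
  moreover have "(\<Sum>u\<in>V. d u - 2) = (\<Sum>u\<in>V. d u) - 2 * real (card V)" by (simp add: sum_subtractf)
  ultimately show ?thesis using low unfolding d_def by linarith
qed

lemma card_nbr_union:
  fixes V :: "'a::linorder set"
  assumes fin: "finite V" and X: "X \<subseteq> V" and sub: "Y \<subseteq> (\<Union>x\<in>X. nbr V E x)"
    and dl: "\<And>x. x \<in> X \<Longrightarrow> real (degree V E x) \<le> t"
  shows "real (card Y) \<le> real (card X) * t"
proof -
  have Xfin: "finite X" using X fin by (rule finite_subset)
  have "card Y \<le> card (\<Union>x\<in>X. nbr V E x)" by (rule card_mono[OF _ sub]) (use Xfin nbr_fin[OF fin] in auto)
  also have "\<dots> \<le> (\<Sum>x\<in>X. card (nbr V E x))" by (rule card_UN_le[OF Xfin])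
  finally have "real (card Y) \<le> (\<Sum>x\<in>X. real (degree V E x))"
    unfolding degree_dgS dgS_def by (metis of_nat_le_iff of_nat_sum)
  also have "\<dots> \<le> (\<Sum>x\<in>X. t)" by (intro sum_mono dl)
  also have "\<dots> = real (card X) * t" by simp
  finally show ?thesis .
qed

theorem proposition7:
  fixes V :: "'a::linorder set" and E :: "'a \<Rightarrow> 'a \<Rightarrow> bool"
  assumes "simple_graph V E" and "connected_graph V E"
    and "graph_index V E > 2" and "second_eig V E \<le> 2"
  shows "(\<exists>M A H. M \<union> A \<union> H = V \<and> M \<inter> A = {} \<and> M \<inter> H = {} \<and> A \<inter> H = {}
            \<and> graph_index M E > 2
            \<and> (\<forall>v\<in>M. graph_index (M - {v}) E \<le> 2)
            \<and> size (filter_mset (\<lambda>\<mu>. \<mu> > 2) (spectrum_mset M E)) = 1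
            \<and> A = {v \<in> V - M. \<exists>m\<in>M. E v m}
            \<and> cyclotomic H E)
       \<and> (let lam = graph_index V E; B = 10 * (3 * lam^4 + lam^2 + 1) in
            real (card {v \<in> V. degree V E v > 2}) \<le> B
          \<and> real (card {v \<in> V. degree V E v = 1}) \<le> lam^2 * B)"
proof -
  note sg = assms(1) and cg = assms(2) and gi = assms(3) and se = assms(4)
  have fin: "finite V" and sym: "\<And>u w. E u w \<Longrightarrow> E w u" and irr: "\<And>v. \<not> E v v"
    using sg unfolding simple_graph_def by auto
  have Vne: "V \<noteq> {}" using cg unfolding connected_graph_def by auto
  have RV: "Rs V E" using Rs_gi[of V E, OF fin sym Vne] gi by simp
  have pa: "\<exists>M A H. M \<union> A \<union> H = V \<and> M \<inter> A = {} \<and> M \<inter> H = {} \<and> A \<inter> H = {}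
            \<and> graph_index M E > 2
            \<and> (\<forall>v\<in>M. graph_index (M - {v}) E \<le> 2)
            \<and> size (filter_mset (\<lambda>\<mu>. \<mu> > 2) (spectrum_mset M E)) = 1
            \<and> A = {v \<in> V - M. \<exists>m\<in>M. E v m}
            \<and> cyclotomic H E" by (rule part_a[OF sg cg gi se])
  define lam where "lam = graph_index V E"
  define t where "t = lam^2"
  define B where "B = 10 * (3 * lam^4 + lam^2 + 1)"
  define D where "D = {v \<in> V. degree V E v > 2}"
  have lam2: "lam > 2" using gi unfolding lam_def .
  have t4: "t \<ge> 4" unfolding t_def using lam2 power_mono[of 2 lam 2] by simp
  have l4: "lam^4 = t^2" unfolding t_def by (simp add: power_mult[symmetric])
  have Bt: "B = 10 * (3 * t^2 + t + 1)" unfolding B_def l4 t_def ..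
  have t2: "t^2 \<ge> 16" using power_mono[OF t4, of 2] by simp
  have B530: "B \<ge> 530" unfolding Bt using t4 t2 by simp
  have dl: "real (degree V E u) \<le> t" if "u \<in> V" for u
    unfolding t_def lam_def by (rule deg_le_gi[OF sg that])
  have Dfin: "finite D" unfolding D_def using fin by simp
  have Dbound: "real (card D) \<le> B"
  proof (cases "\<exists>v\<in>V. degree V E v \<ge> 4")
    case True
    then obtain v where v: "v \<in> V" "degree V E v \<ge> 4" by blast
    obtain M where MV: "M \<subseteq> V" and RM: "Rs M E" and cM: "card M \<le> 6"
      using star_M[OF sg cg RV v] by blast
    define A where "A = {u \<in> V - M. \<exists>m\<in>M. E u m}"
    define HA where "HA = {h \<in> V - M - A. \<exists>a\<in>A. E h a}"
    have dc: "card D \<le> card (D \<inter> M) + card A + 3 * card HA"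
      using decomp[OF sg cg se MV RM] unfolding D_def A_def HA_def by simp
    have Mfin: "finite M" using MV fin by (rule finite_subset)
    have cDM: "card (D \<inter> M) \<le> 6" using card_mono[OF Mfin, of "D \<inter> M"] cM by auto
    have AV: "A \<subseteq> V" unfolding A_def by auto
    have subA: "A \<subseteq> (\<Union>m\<in>M. nbr V E m)"
    proof
      fix u assume "u \<in> A"
      then obtain m where "u \<in> V" "m \<in> M" "E u m" unfolding A_def by auto
      thus "u \<in> (\<Union>m\<in>M. nbr V E m)" unfolding nbr_def using sym by blast
    qed
    have subHA: "HA \<subseteq> (\<Union>a\<in>A. nbr V E a)"
    proof
      fix u assume "u \<in> HA"
      then obtain a where "u \<in> V" "a \<in> A" "E u a" unfolding HA_def by auto
      thus "u \<in> (\<Union>a\<in>A. nbr V E a)" unfolding nbr_def using sym by blast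
    qed
    have cA: "real (card A) \<le> real (card M) * t" by (rule card_nbr_union[OF fin MV subA dl]) (use MV in auto)
    have cHA: "real (card HA) \<le> real (card A) * t" by (rule card_nbr_union[OF fin AV subHA dl]) (use AV in auto)
    have "real (card M) * t \<le> 6 * t" using cM t4 by (intro mult_right_mono) auto
    hence cA6: "real (card A) \<le> 6 * t" using cA by linarith
    have "real (card A) * t \<le> (6 * t) * t" using cA6 t4 by (intro mult_right_mono) auto
    hence cHA6: "real (card HA) \<le> 6 * t * t" using cHA by linarith
    have "real (card D) \<le> real (card (D \<inter> M) + card A + 3 * card HA)" using dc by (simp only: of_nat_le_iff)
    hence "real (card D) \<le> real (card (D \<inter> M)) + real (card A) + 3 * real (card HA)" by simp
    moreover have "real (card (D \<inter> M)) \<le> 6" using cDM by simp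
    ultimately have "real (card D) \<le> 6 + 6 * t + 3 * (6 * t * t)" using cA6 cHA6 by linarith
    also have "\<dots> \<le> B" unfolding Bt using t4 by (simp add: power2_eq_square)
    finally show ?thesis .
  next
    case False
    hence deg3: "\<And>u. u \<in> V \<Longrightarrow> degree V E u \<le> 3" by force
    obtain v0 where v0: "v0 \<in> V" using Vne by blast
    have "card D \<le> 157" unfolding D_def by (rule cubic_bound[OF sg cg se RV v0 deg3])
    thus ?thesis using B530 by simp
  qed
  have lb: "real (card {u\<in>V. degree V E u = 1}) \<le> 2 + (\<Sum>u\<in>D. (real (degree V E u) - 2))"
    unfolding D_def by (rule leaf_bound[OF sg cg])
  also have "\<dots> \<le> 2 + (\<Sum>u\<in>D. (t - 2))"
    using dl unfolding D_def by (intro add_left_mono sum_mono) auto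
  also have "\<dots> = 2 + real (card D) * (t - 2)" by simp
  also have "\<dots> \<le> 2 + B * (t - 2)" using Dbound t4 by (intro add_left_mono mult_right_mono) auto
  also have "\<dots> \<le> t * B" using B530 by (simp add: algebra_simps)
  finally have Lb: "real (card {u\<in>V. degree V E u = 1}) \<le> lam^2 * B" unfolding t_def .
  show ?thesis
    unfolding Let_def lam_def[symmetric] B_def[symmetric] using pa Dbound Lb unfolding D_def by blast
qed

end
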